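(* Let $n\geq 2$, let $A\subseteq\mathbb{R}^n$ be a bounded connected open set and let $u\in C^2(A)$ satisfy $\Delta u=-1$ in $A$. Suppose there exists $x_0\in A$ such that the function $$v(x)=u(x_0)+\langle\nabla u(x_0),x-x_0\rangle-u(x)$$ is nonnegative and $\sqrt{v}$ is convex in a neighborhood of $x_0$. Then $u$ is a quadratic polynomial. *)

theory Defs
  imports "HOL-Analysis.Analysis"
begin

definition partial_deriv :: "(real^'n \<Rightarrow> real) \<Rightarrow> 'n \<Rightarrow> real^'n \<Rightarrow> real" where
  "partial_deriv u i x = frechet_derivative u (at x) (axis i 1)"

definition grad :: "(real^'n \<Rightarrow> real) \<Rightarrow> real^'n \<Rightarrow> real^'n" where
  "grad u x = (\<chi> i. partial_deriv u i x)"

definition C2_on :: "(real^'n) set \<Rightarrow> (real^'n \<Rightarrow> real) \<Rightarrow> bool" where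
  "C2_on A u \<longleftrightarrow>
     (\<forall>x\<in>A. u differentiable (at x)) \<and>
     (\<forall>i. \<forall>x\<in>A. partial_deriv u i differentiable (at x)) \<and>
     (\<forall>i j. continuous_on A (partial_deriv (partial_deriv u i) j))"

definition laplacian :: "(real^'n \<Rightarrow> real) \<Rightarrow> real^'n \<Rightarrow> real" where
  "laplacian u x = (\<Sum>i\<in>UNIV. partial_deriv (partial_deriv u i) i x)"

definition quadratic_polynomial_on :: "(real^'n) set \<Rightarrow> (real^'n \<Rightarrow> real) \<Rightarrow> bool" where
  "quadratic_polynomial_on A u \<longleftrightarrow>
     (\<exists>(a::'n \<Rightarrow> 'n \<Rightarrow> real) (b::'n \<Rightarrow> real) (c::real).
        \<forall>x\<in>A. u x = (\<Sum>i\<in>UNIV. \<Sum>j\<in>UNIV. a i j * x$i * x$j) + (\<Sum>i\<in>UNIV. b i * x$i) + c)"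

end

theory Submission
  imports Defs
begin

definition mp :: "real \<Rightarrow> real" where "mp s = max 0 (1 - s)"

lemma mp_nonneg: "mp s \<ge> 0" by (simp add: mp_def)

lemma mp_pow_deriv:
  assumes k: "k \<ge> 2"
  shows "((\<lambda>s. mp s ^ k) has_real_derivative (- real k * mp s ^ (k - 1))) (at s)"
proof (cases "s < 1")
  case True
  have "((\<lambda>s. (1 - s) ^ k) has_real_derivative (real k * (1 - s) ^ (k - 1) * (- 1))) (at s)"
    by (auto intro!: derivative_eq_intros)
  then have d: "((\<lambda>s. (1 - s) ^ k) has_real_derivative (- real k * mp s ^ (k - 1))) (at s)"
    using True by (simp add: mp_def)
  show ?thesis
    by (rule has_field_derivative_transform_within_open[OF d, of "{..<1}"]) (use True in \<open>auto simp: mp_def\<close>)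
next
  case False
  show ?thesis
  proof (cases "s > 1")
    case True
    have d: "((\<lambda>s. 0) has_real_derivative (- real k * mp s ^ (k - 1))) (at s)"
      using True k by (simp add: mp_def zero_power)
    show ?thesis
      by (rule has_field_derivative_transform_within_open[OF d, of "{1<..}"]) (use True k in \<open>auto simp: mp_def\<close>)
  next
    case False
    with \<open>\<not> s < 1\<close> have s1: "s = 1" by auto
    have lim: "((\<lambda>y. (mp y ^ k - mp 1 ^ k) / (y - 1)) \<longlongrightarrow> 0) (at 1)"
    proof (rule Lim_null_comparison[where g="\<lambda>y. \<bar>y - 1\<bar>"])
      show "\<forall>\<^sub>F y in at 1. norm ((mp y ^ k - mp 1 ^ k) / (y - 1)) \<le> \<bar>y - 1\<bar>"
      proof (rule eventually_mono[OF eventually_at_ball'[of 1 1 UNIV]])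
        show "(0::real) < 1" by simp
        fix y :: real assume "y \<in> ball 1 1 \<and> y \<noteq> 1 \<and> y \<in> UNIV"
        then have y: "y \<in> ball 1 1" "y \<noteq> 1" by auto
        have m: "mp y \<le> \<bar>y - 1\<bar>" by (simp add: mp_def)
        have m1: "mp y \<le> 1" using y by (auto simp: mp_def dist_real_def)
        have "mp y ^ k = mp y ^ 2 * mp y ^ (k - 2)"
          using k by (metis le_add_diff_inverse power_add)
        also have "\<dots> \<le> mp y ^ 2 * 1"
          by (intro mult_left_mono power_le_one) (auto simp: mp_nonneg m1)
        also have "\<dots> \<le> \<bar>y - 1\<bar> ^ 2"
          using power_mono[OF m mp_nonneg[of y], of 2] by simp
        finally have "mp y ^ k \<le> \<bar>y - 1\<bar> ^ 2" .
        moreover have "mp 1 = 0" by (simp add: mp_def)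
        ultimately show "norm ((mp y ^ k - mp 1 ^ k) / (y - 1)) \<le> \<bar>y - 1\<bar>"
          using y k mp_nonneg[of y]
          by (auto simp: abs_divide power2_eq_square divide_le_eq zero_power)
      qed
      show "((\<lambda>y::real. \<bar>y - 1\<bar>) \<longlongrightarrow> 0) (at 1)"
      proof -
        have "((\<lambda>y::real. y) \<longlongrightarrow> 1) (at 1)" by (rule tendsto_ident_at)
        then have "((\<lambda>y::real. y - 1) \<longlongrightarrow> 0) (at 1)" using LIM_zero[OF \<open>((\<lambda>y::real. y) \<longlongrightarrow> 1) (at 1)\<close>] by simp
        from tendsto_rabs_zero[OF this] show ?thesis .
      qed
    qed
    have "mp 1 = 0" by (simp add: mp_def)
    then show ?thesis using lim s1 k
      by (simp add: has_field_derivative_iff zero_power)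
  qed
qed

definition rho :: "real^'n \<Rightarrow> real" where "rho y = mp (y \<bullet> y) ^ 2"
definition Qk :: "real^'n \<Rightarrow> real" where "Qk y = - (mp (y \<bullet> y) ^ 3) / 6"
definition grho :: "real^'n \<Rightarrow> real^'n" where "grho y = (-4 * mp (y \<bullet> y)) *\<^sub>R y"
definition gQ :: "real^'n \<Rightarrow> real^'n" where "gQ y = rho y *\<^sub>R y"

lemma continuous_mp[continuous_intros]:
  "continuous_on S f \<Longrightarrow> continuous_on S (\<lambda>x. mp (f x))"
  unfolding mp_def by (intro continuous_intros)

lemma continuous_rho: "continuous_on S rho"
  unfolding rho_def by (intro continuous_intros)
lemma continuous_Qk: "continuous_on S Qk"
  unfolding Qk_def by (intro continuous_intros) auto
lemma continuous_grho: "continuous_on S grho"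
  unfolding grho_def by (intro continuous_intros)
lemma continuous_gQ: "continuous_on S gQ"
  unfolding gQ_def by (intro continuous_intros continuous_rho)

lemma mp_comp_deriv:
  assumes k: "k \<ge> 2"
  shows "((\<lambda>y::real^'n. mp (y \<bullet> y) ^ k) has_derivative
           (\<lambda>v. - real k * mp (y \<bullet> y) ^ (k - 1) * (2 * (y \<bullet> v)))) (at y)"
proof -
  have g: "((\<lambda>y::real^'n. y \<bullet> y) has_derivative (\<lambda>v. 2 * (y \<bullet> v))) (at y)"
    by (rule has_derivative_eq_rhs, rule derivative_intros, rule derivative_intros, rule derivative_intros)
       (auto simp: inner_commute)
  have f: "((\<lambda>s. mp s ^ k) has_derivative (*) (- real k * mp (y \<bullet> y) ^ (k - 1))) (at (y \<bullet> y))"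
    using mp_pow_deriv[OF k, of "y \<bullet> y"] by (simp add: has_field_derivative_def)
  from diff_chain_at[OF g f] show ?thesis by (simp add: o_def)
qed

lemma rho_deriv: "(rho has_derivative (\<lambda>v. grho y \<bullet> v)) (at y)"
proof -
  have "((\<lambda>y. mp (y \<bullet> y) ^ 2) has_derivative (\<lambda>v. grho y \<bullet> v)) (at y)"
    by (rule has_derivative_eq_rhs[OF mp_comp_deriv[of 2 y]]) (auto simp: grho_def fun_eq_iff algebra_simps)
  then show ?thesis unfolding rho_def[abs_def] .
qed

lemma Qk_deriv: "(Qk has_derivative (\<lambda>v. gQ y \<bullet> v)) (at y)"
proof -
  have "((\<lambda>y. - (1/6) * mp (y \<bullet> y) ^ 3) has_derivative
       (\<lambda>v. - (1/6) * (- real 3 * mp (y \<bullet> y) ^ (3 - 1) * (2 * (y \<bullet> v))))) (at y)"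
    by (intro has_derivative_mult_right mp_comp_deriv) simp
  then have d: "((\<lambda>y. - (1/6) * mp (y \<bullet> y) ^ 3) has_derivative (\<lambda>v. gQ y \<bullet> v)) (at y)"
    by (rule has_derivative_eq_rhs) (auto simp: gQ_def rho_def fun_eq_iff algebra_simps)
  have eq: "(\<lambda>y::real^'n. - (mp (y \<bullet> y) ^ 3) / 6) = (\<lambda>y. - (1/6) * mp (y \<bullet> y) ^ 3)"
    by (auto simp: fun_eq_iff)
  show ?thesis unfolding Qk_def[abs_def] eq by (rule d)
qed

lemma mp_zero: "norm y \<ge> 1 \<Longrightarrow> mp (y \<bullet> y) = 0"
proof -
  assume "norm y \<ge> 1"
  then have "1 \<le> norm y * norm y" by (metis mult_mono' mult_1 norm_ge_zero zero_le_one)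
  then show ?thesis by (simp add: mp_def power2_norm_eq_inner[symmetric] power2_eq_square)
qed

lemma rho_zero: "norm y \<ge> 1 \<Longrightarrow> rho y = 0"
  and Qk_zero: "norm y \<ge> 1 \<Longrightarrow> Qk y = 0"
  and grho_zero: "norm y \<ge> 1 \<Longrightarrow> grho y = 0"
  and gQ_zero: "norm y \<ge> 1 \<Longrightarrow> gQ y = 0"
  by (simp_all add: rho_def Qk_def grho_def gQ_def mp_zero)

lemma rho_nonneg: "rho y \<ge> 0" by (simp add: rho_def)

lemma rho_pos: "norm y < 1 \<Longrightarrow> rho y > 0"
proof -
  assume "norm y < 1"
  then have "norm y * norm y < 1" by (metis mult_strict_mono' mult_1 norm_ge_zero zero_le_one)
  then have "mp (y \<bullet> y) > 0" by (simp add: mp_def power2_norm_eq_inner[symmetric] power2_eq_square)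
  then show ?thesis by (simp add: rho_def)
qed

lemma cball_sub_cube:
  fixes y :: "real^'n"
  assumes "norm y \<le> r"
  shows "y \<in> cbox (- (r *\<^sub>R 1)) (r *\<^sub>R 1)"
proof -
  have "- r \<le> y$j \<and> y$j \<le> r" for j using component_le_norm_cart[of y j] assms by linarith
  then show ?thesis unfolding mem_box_cart by simp
qed

lemma F_cont_UNIV:
  fixes F :: "real^'n \<Rightarrow> 'b::real_normed_vector"
  assumes cont: "continuous_on (cball 0 1) F"
    and out: "\<And>y. norm y \<ge> 1 \<Longrightarrow> F y = 0"
  shows "continuous_on UNIV F"
proof -
  have eq: "F = (\<lambda>y. if norm y \<le> 1 then F y else 0)" using out by (auto simp: fun_eq_iff)
  have cl: "closed {y::real^'n. norm y \<ge> 1}"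
  proof -
    have "{y::real^'n. norm y \<ge> 1} = - ball 0 1" by auto
    then show ?thesis using closed_Compl[OF open_ball] by simp
  qed
  have "continuous_on (cball 0 1 \<union> {y. norm y \<ge> 1}) (\<lambda>y. if norm y \<le> 1 then F y else 0)"
  proof (rule continuous_on_cases[OF closed_cball cl cont continuous_on_const])
    show "\<forall>x. x \<in> cball 0 1 \<and> \<not> norm x \<le> 1 \<or> x \<in> {y. 1 \<le> norm y} \<and> norm x \<le> 1 \<longrightarrow> F x = 0"
      using out by auto
  qed
  moreover have U: "cball 0 1 \<union> {y::real^'n. norm y \<ge> 1} = UNIV" by auto
  ultimately have c: "continuous_on UNIV (\<lambda>y. if norm y \<le> 1 then F y else 0)" by simp
  show ?thesis by (subst eq) (rule c)
qed

lemma ibp_zero: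
  fixes f :: "real^'n \<Rightarrow> real" and F :: "real^'n \<Rightarrow> real^'n"
  assumes zero: "\<And>y. norm y \<ge> 1 \<Longrightarrow> f y = 0"
    and der: "\<And>y. norm y \<le> 1 \<Longrightarrow> (f has_derivative (\<lambda>v. F y \<bullet> v)) (at y)"
    and cont: "continuous_on (cball 0 1) F"
    and out: "\<And>y. norm y \<ge> 1 \<Longrightarrow> F y = 0"
  shows "integral (cbox (-1) 1) (\<lambda>y. F y $ i) = 0"
proof -
  define e :: "real^'n" where "e = axis i 1"
  have derall: "(f has_derivative (\<lambda>v. F y \<bullet> v)) (at y)" for y
  proof (cases "norm y \<le> 1")
    case True then show ?thesis by (rule der)
  next
    case False
    have "((\<lambda>y. 0) has_derivative (\<lambda>v. F y \<bullet> v)) (at y)"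
      using False out[of y] by simp
    then show ?thesis
    proof (rule has_derivative_transform_within_open[where s="{y. norm y > 1}"])
      have "{y::real^'n. norm y > 1} = - cball 0 1" by auto
      then show "open {y::real^'n. norm y > 1}" using open_Compl[OF closed_cball] by simp
      show "y \<in> {y. norm y > 1}" using False by simp
      show "\<And>x. x \<in> {y. norm y > 1} \<Longrightarrow> 0 = f x" using zero by simp
    qed
  qed
  have Fc: "continuous_on UNIV F" by (rule F_cont_UNIV[OF cont out])
  have fc: "continuous_on UNIV f"
    by (intro continuous_at_imp_continuous_on ballI has_derivative_continuous[OF derall])
  have cube_ball: "norm y < 1 \<Longrightarrow> y \<in> cbox (-1) (1::real^'n)" for y
    using cball_sub_cube[of y 1] by simp
  define I where "I = integral (cbox (-1) 1) f"
  have fI: "(f has_integral I) (cbox (-1) 1)"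
    unfolding I_def by (rule integrable_integral, rule integrable_continuous, rule continuous_on_subset[OF fc]) auto
  define Phi where "Phi t = integral (cbox (-3) 3) (\<lambda>y. f (y + t *\<^sub>R e))" for t
  have Phi_const: "Phi t = I" if t: "t \<in> {-1..1}" for t
  proof -
    let ?c = "t *\<^sub>R e"
    have sub: "cbox (-1) 1 \<subseteq> cbox (-3 + ?c) (3 + ?c)"
    proof
      fix x :: "real^'n" assume "x \<in> cbox (-1) 1"
      then have xb: "\<forall>j. -1 \<le> x$j \<and> x$j \<le> 1" by (simp add: mem_box_cart)
      show "x \<in> cbox (-3 + ?c) (3 + ?c)" unfolding mem_box_cart
      proof
        fix j
        have h: "-1 \<le> x$j" "x$j \<le> 1" using xb by auto
        show "(-3 + ?c)$j \<le> x$j \<and> x$j \<le> (3 + ?c)$j" using h t by (auto simp: e_def axis_def)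
      qed
    qed
    have "(f has_integral I) (cbox (-3 + ?c) (3 + ?c))"
    proof (rule has_integral_on_superset[OF fI _ sub])
      fix x :: "real^'n" assume "x \<notin> cbox (-1) 1"
      then have "\<not> norm x < 1" using cube_ball by blast
      then show "f x = 0" using zero by simp
    qed
    from has_integral_affinity'[OF this, of 1 ?c]
    have "((\<lambda>y. f (y + ?c)) has_integral I) (cbox (-3) 3)" by simp
    then show ?thesis unfolding Phi_def by (rule integral_unique)
  qed
  have dPhi: "(Phi has_field_derivative integral (cbox (-3) 3) (\<lambda>y. F (y + 0 *\<^sub>R e) \<bullet> e)) (at 0 within {-1..1})"
    unfolding Phi_def
  proof (rule leibniz_rule_field_derivative)
    fix t :: real and y :: "real^'n"
    have "((\<lambda>t. y + t *\<^sub>R e) has_derivative (\<lambda>s. s *\<^sub>R e)) (at t)"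
      by (auto intro!: derivative_eq_intros)
    from diff_chain_at[OF this derall[of "y + t *\<^sub>R e"]]
    have "((\<lambda>t. f (y + t *\<^sub>R e)) has_derivative (\<lambda>s. F (y + t *\<^sub>R e) \<bullet> (s *\<^sub>R e))) (at t)"
      by (simp add: o_def)
    then have "((\<lambda>t. f (y + t *\<^sub>R e)) has_derivative (\<lambda>s. (F (y + t *\<^sub>R e) \<bullet> e) * s)) (at t)"
      by (rule has_derivative_eq_rhs) (simp add: fun_eq_iff)
    then show "((\<lambda>t. f (y + t *\<^sub>R e)) has_field_derivative F (y + t *\<^sub>R e) \<bullet> e) (at t within {-1..1})"
      unfolding has_field_derivative_def by (rule has_derivative_at_withinI)
  next
    fix t :: real
    show "(\<lambda>y. f (y + t *\<^sub>R e)) integrable_on cbox (-3) 3"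
      by (rule integrable_continuous, rule continuous_on_compose2[OF fc]) (auto intro!: continuous_intros)
  next
    show "continuous_on ({-1..1} \<times> cbox (-3) 3) (\<lambda>(t, y). F (y + t *\<^sub>R e) \<bullet> e)"
    proof -
      have c1: "continuous_on UNIV (\<lambda>p::real \<times> (real^'n). F (snd p + fst p *\<^sub>R e))"
        by (rule continuous_on_compose2[OF Fc]) (auto intro!: continuous_intros)
      show ?thesis
        by (auto simp: split_def intro!: continuous_intros continuous_on_subset[OF c1])
    qed
  qed auto
  have int_eq: "interior {-1..1::real} = {-1<..<1}" by simp
  have at0: "at (0::real) within {-1..1} = at 0"
    by (rule at_within_interior) (simp add: int_eq)
  have dPhi': "(Phi has_field_derivative integral (cbox (-3) 3) (\<lambda>y. F y \<bullet> e)) (at 0)"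
    using dPhi at0 by simp
  have "((\<lambda>_. I) has_field_derivative 0) (at (0::real))" by simp
  then have d0: "(Phi has_field_derivative 0) (at 0)"
    by (rule has_field_derivative_transform_within_open[where S="{-1<..<1}"]) (auto simp: Phi_const)
  have z3: "integral (cbox (-3) 3) (\<lambda>y. F y \<bullet> e) = 0"
    by (rule DERIV_unique[OF dPhi' d0])
  have Fi: "((\<lambda>y. F y $ i) has_integral integral (cbox (-1) 1) (\<lambda>y. F y $ i)) (cbox (-1) 1)"
    by (rule integrable_integral, rule integrable_continuous) (auto intro!: continuous_intros continuous_on_subset[OF Fc])
  have "((\<lambda>y. F y $ i) has_integral integral (cbox (-1) 1) (\<lambda>y. F y $ i)) (cbox (-3) 3)"
    (is ?A)
  proof (rule has_integral_on_superset[OF Fi])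
    show "F x $ i = 0" if "x \<notin> cbox (-1) 1" for x
    proof -
      have "\<not> norm x < 1" using that cube_ball by blast
      then show ?thesis using out by simp
    qed
    show "cbox (-1) 1 \<subseteq> cbox (-3) (3::real^'n)"
    proof
      fix x :: "real^'n" assume "x \<in> cbox (-1) 1"
      then have xb: "\<forall>j. -1 \<le> x$j \<and> x$j \<le> 1" by (simp add: mem_box_cart)
      show "x \<in> cbox (-3) 3" unfolding mem_box_cart
      proof
        fix j
        have h: "-1 \<le> x$j" "x$j \<le> 1" using xb by auto
        show "(-3::real^'n)$j \<le> x$j \<and> x$j \<le> (3::real^'n)$j" using h by simp
      qed
    qed
  qed
  note Ae = this
  have eqF: "(\<lambda>y. F y \<bullet> e) = (\<lambda>y. F y $ i)"
    by (simp add: e_def inner_axis fun_eq_iff)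
  show ?thesis using z3 integral_unique[OF Ae] eqF by simp
qed

lemma cube_norm:
  fixes y :: "real^'n"
  assumes "y \<in> cbox (-1) 1"
  shows "norm y \<le> real CARD('n)"
proof -
  have "\<bar>y$i\<bar> \<le> 1" for i using assms by (auto simp: mem_box_cart abs_le_iff)
  then have "(\<Sum>i\<in>UNIV. \<bar>y$i\<bar>) \<le> of_nat (card (UNIV::'n set)) * 1"
    by (intro sum_bounded_above) auto
  then show ?thesis using norm_le_l1_cart[of y] by simp
qed

lemma card_ge1: "real CARD('n::finite) \<ge> 1"
  using card_ge_0_finite[of "UNIV::'n set"] by simp

lemma cont_comp_aff:
  fixes g :: "real^'n \<Rightarrow> 'b::topological_space"
  assumes "continuous_on A g" "\<And>y. y \<in> S \<Longrightarrow> a + r *\<^sub>R y \<in> A"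
  shows "continuous_on S (\<lambda>y. g (a + r *\<^sub>R y))"
proof -
  have "continuous_on S (\<lambda>y. a + r *\<^sub>R y)" by (intro continuous_intros)
  then show ?thesis by (rule continuous_on_compose2[OF assms(1)]) (use assms(2) in auto)
qed

lemma cont_comp_aff2:
  fixes g :: "real^'n \<Rightarrow> 'b::topological_space"
  assumes "continuous_on A g" "\<And>p. p \<in> S \<Longrightarrow> a + fst p *\<^sub>R snd p \<in> A"
  shows "continuous_on S (\<lambda>p. g (a + fst p *\<^sub>R snd p))"
proof -
  have "continuous_on S (\<lambda>p. a + fst p *\<^sub>R snd p)" by (intro continuous_intros)
  then show ?thesis by (rule continuous_on_compose2[OF assms(1)]) (use assms(2) in auto)
qed

lemma deriv_cont_on:
  assumes "\<And>x. x \<in> A \<Longrightarrow> (g has_derivative g' x) (at x)"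
  shows "continuous_on A g"
  by (intro continuous_at_imp_continuous_on ballI has_derivative_continuous[OF assms]) auto

lemma mvp_harmonic:
  fixes h :: "real^'n \<Rightarrow> real" and G :: "real^'n \<Rightarrow> real^'n" and Hm :: "real^'n \<Rightarrow> real^'n^'n"
  assumes hd: "\<And>x. x \<in> A \<Longrightarrow> (h has_derivative (\<lambda>v. G x \<bullet> v)) (at x)"
    and Gd: "\<And>x i. x \<in> A \<Longrightarrow> ((\<lambda>x. G x $ i) has_derivative (\<lambda>v. Hm x $ i \<bullet> v)) (at x)"
    and Hc: "continuous_on A Hm"
    and tr: "\<And>x. x \<in> A \<Longrightarrow> (\<Sum>i\<in>UNIV. Hm x $ i $ i) = 0"
    and R: "R > 0" "cball a (R * real CARD('n)) \<subseteq> A"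
  shows "integral (cbox (-1) 1) (\<lambda>y. h (a + R *\<^sub>R y) * rho y) = h a * integral (cbox (-1) (1::real^'n)) rho"
proof -
  let ?K = "real CARD('n)"
  let ?C = "cbox (-1) (1::real^'n)"
  have inA: "a + r *\<^sub>R y \<in> A" if "r \<in> {0..R}" "y \<in> ?C" for r y
  proof -
    have "norm (r *\<^sub>R y) \<le> R * ?K"
      using that cube_norm[of y] by (auto intro!: mult_mono)
    then show ?thesis using R(2) by (auto simp: dist_norm)
  qed
  have inA1: "a + r *\<^sub>R y \<in> A" if "r \<in> {0..R}" "norm y \<le> 1" for r y
    using inA[OF that(1)] cball_sub_cube[OF that(2)] by simp
  have hc: "continuous_on A h" by (rule deriv_cont_on[OF hd])
  have Gic: "continuous_on A (\<lambda>x. G x $ i)" for i by (rule deriv_cont_on[OF Gd])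
  have Gc: "continuous_on A G"
  proof -
    have "continuous_on A (\<lambda>x. \<chi> i. G x $ i)" by (intro continuous_intros Gic)
    then show ?thesis by simp
  qed
  define Psi where "Psi r = integral ?C (\<lambda>y. h (a + r *\<^sub>R y) * rho y)" for r
  have dPsi: "(Psi has_field_derivative integral ?C (\<lambda>y. (G (a + r *\<^sub>R y) \<bullet> y) * rho y)) (at r within {0..R})"
    if r: "r \<in> {0..R}" for r
    unfolding Psi_def
  proof (rule leibniz_rule_field_derivative[OF _ _ _ r])
    fix s y assume s: "s \<in> {0..R}" and y: "y \<in> ?C"
    have "((\<lambda>s. a + s *\<^sub>R y) has_derivative (\<lambda>t. t *\<^sub>R y)) (at s)"
      by (auto intro!: derivative_eq_intros)
    from diff_chain_at[OF this hd[OF inA[OF s y]]]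
    have "((\<lambda>s. h (a + s *\<^sub>R y)) has_derivative (\<lambda>t. G (a + s *\<^sub>R y) \<bullet> (t *\<^sub>R y))) (at s)"
      by (simp add: o_def)
    then have "((\<lambda>s. h (a + s *\<^sub>R y) * rho y) has_derivative (\<lambda>t. (G (a + s *\<^sub>R y) \<bullet> (t *\<^sub>R y)) * rho y)) (at s)"
      by (rule has_derivative_mult_left)
    then have "((\<lambda>s. h (a + s *\<^sub>R y) * rho y) has_derivative (\<lambda>t. ((G (a + s *\<^sub>R y) \<bullet> y) * rho y) * t)) (at s)"
      by (rule has_derivative_eq_rhs) (simp add: fun_eq_iff algebra_simps)
    then show "((\<lambda>s. h (a + s *\<^sub>R y) * rho y) has_field_derivative (G (a + s *\<^sub>R y) \<bullet> y) * rho y) (at s within {0..R})"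
      unfolding has_field_derivative_def by (rule has_derivative_at_withinI)
  next
    fix s assume s: "s \<in> {0..R}"
    show "(\<lambda>y. h (a + s *\<^sub>R y) * rho y) integrable_on ?C"
      by (rule integrable_continuous, intro continuous_intros continuous_rho cont_comp_aff[OF hc])
         (use inA[OF s] in auto)
  next
    have c1: "continuous_on ({0..R} \<times> ?C) (\<lambda>p. G (a + fst p *\<^sub>R snd p))"
      by (rule cont_comp_aff2[OF Gc]) (use inA in auto)
    have c2: "continuous_on ({0..R} \<times> ?C) (\<lambda>p. rho (snd p))"
      by (rule continuous_on_compose2[OF continuous_rho]) (auto intro!: continuous_intros)
    show "continuous_on ({0..R} \<times> ?C) (\<lambda>(s, y). (G (a + s *\<^sub>R y) \<bullet> y) * rho y)"
      unfolding split_def by (intro continuous_intros c1 c2)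
  qed auto
  have dzero: "integral ?C (\<lambda>y. (G (a + r *\<^sub>R y) \<bullet> y) * rho y) = 0" if r: "r \<in> {0..R}" for r
  proof -
    define F where "F i y = (Qk y * r) *\<^sub>R (Hm (a + r *\<^sub>R y) $ i) + (G (a + r *\<^sub>R y) $ i) *\<^sub>R gQ y" for i y
    have Fz: "integral ?C (\<lambda>y. F i y $ i) = 0" for i
    proof (rule ibp_zero[where f="\<lambda>y. Qk y * G (a + r *\<^sub>R y) $ i"])
      show "Qk y * G (a + r *\<^sub>R y) $ i = 0" if "norm y \<ge> 1" for y
        using Qk_zero[OF that] by simp
      show "F i y = 0" if "norm y \<ge> 1" for y
        using Qk_zero[OF that] gQ_zero[OF that] by (simp add: F_def)
      show "((\<lambda>y. Qk y * G (a + r *\<^sub>R y) $ i) has_derivative (\<lambda>v. F i y \<bullet> v)) (at y)"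
        if y: "norm y \<le> 1" for y
      proof -
        have "((\<lambda>y. a + r *\<^sub>R y) has_derivative (\<lambda>v. r *\<^sub>R v)) (at y)"
          by (auto intro!: derivative_eq_intros)
        from diff_chain_at[OF this Gd[OF inA1[OF r y]]]
        have g: "((\<lambda>y. G (a + r *\<^sub>R y) $ i) has_derivative (\<lambda>v. Hm (a + r *\<^sub>R y) $ i \<bullet> (r *\<^sub>R v))) (at y)"
          by (simp add: o_def)
        have "((\<lambda>y. Qk y * G (a + r *\<^sub>R y) $ i) has_derivative
               (\<lambda>v. Qk y * (Hm (a + r *\<^sub>R y) $ i \<bullet> (r *\<^sub>R v)) + (gQ y \<bullet> v) * G (a + r *\<^sub>R y) $ i)) (at y)"
          by (rule has_derivative_mult[OF Qk_deriv g])
        then show ?thesis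
          by (rule has_derivative_eq_rhs) (simp add: fun_eq_iff F_def algebra_simps inner_add_left)
      qed
      show "continuous_on (cball 0 1) (F i)"
      proof -
        have c1: "continuous_on (cball 0 1) (\<lambda>y. Hm (a + r *\<^sub>R y) $ i)"
          by (intro continuous_intros cont_comp_aff[OF Hc]) (use inA1[OF r] in auto)
        have c2: "continuous_on (cball 0 1) (\<lambda>y. G (a + r *\<^sub>R y) $ i)"
          by (rule cont_comp_aff[OF Gic]) (use inA1[OF r] in auto)
        show ?thesis unfolding F_def[abs_def]
          by (intro continuous_intros c1 c2 continuous_Qk continuous_gQ)
      qed
    qed
    have sumF: "(\<Sum>i\<in>UNIV. F i y $ i) = (G (a + r *\<^sub>R y) \<bullet> y) * rho y" if y: "y \<in> ?C" for y
    proof -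
      have "(\<Sum>i\<in>UNIV. F i y $ i) = Qk y * r * (\<Sum>i\<in>UNIV. Hm (a + r *\<^sub>R y) $ i $ i)
             + (\<Sum>i\<in>UNIV. G (a + r *\<^sub>R y) $ i * gQ y $ i)"
        by (simp add: F_def sum.distrib sum_distrib_left algebra_simps)
      also have "\<dots> = (\<Sum>i\<in>UNIV. G (a + r *\<^sub>R y) $ i * gQ y $ i)"
        using tr[OF inA[OF r y]] by simp
      also have "\<dots> = G (a + r *\<^sub>R y) \<bullet> gQ y" by (simp add: inner_vec_def)
      also have "\<dots> = (G (a + r *\<^sub>R y) \<bullet> y) * rho y" by (simp add: gQ_def)
      finally show ?thesis .
    qed
    have intF: "(\<lambda>y. F i y $ i) integrable_on ?C" for i
    proof -
      have c1: "continuous_on ?C (\<lambda>y. Hm (a + r *\<^sub>R y) $ i)"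
        by (intro continuous_intros cont_comp_aff[OF Hc]) (use inA[OF r] in auto)
      have c2: "continuous_on ?C (\<lambda>y. G (a + r *\<^sub>R y) $ i)"
        by (rule cont_comp_aff[OF Gic]) (use inA[OF r] in auto)
      show ?thesis unfolding F_def
        by (rule integrable_continuous) (intro continuous_intros c1 c2 continuous_Qk continuous_gQ)
    qed
    have "integral ?C (\<lambda>y. (G (a + r *\<^sub>R y) \<bullet> y) * rho y) = integral ?C (\<lambda>y. \<Sum>i\<in>UNIV. F i y $ i)"
      by (rule integral_cong) (simp add: sumF)
    also have "\<dots> = (\<Sum>i\<in>UNIV. integral ?C (\<lambda>y. F i y $ i))"
      by (rule integral_sum) (auto intro: intF)
    also have "\<dots> = 0" by (simp add: Fz)
    finally show ?thesis .
  qed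
  have "\<exists>c. \<forall>r\<in>{0..R}. Psi r = c"
  proof (rule has_derivative_zero_constant)
    fix r assume r: "r \<in> {0..R}"
    show "(Psi has_derivative (\<lambda>h. 0)) (at r within {0..R})"
    proof -
      have z: "(*) (0::real) = (\<lambda>h. 0)" by auto
      show ?thesis using dPsi[OF r] by (simp add: dzero[OF r] has_field_derivative_def z)
    qed
  qed simp
  then have "Psi R = Psi 0" using R(1) by auto
  moreover have "Psi 0 = integral ?C (\<lambda>y. h a * rho y)" by (simp add: Psi_def)
  moreover have "integral ?C (\<lambda>y. h a * rho y) = h a * integral ?C rho"
    by (rule integral_mult_right)
  ultimately show ?thesis by (simp add: Psi_def)
qed

definition cr :: "'n::finite itself \<Rightarrow> real" where
  "cr _ = integral (cbox (-1) (1::real^'n)) rho"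

definition mvp :: "(real^'n) set \<Rightarrow> (real^'n \<Rightarrow> real) \<Rightarrow> bool" where
  "mvp A h \<longleftrightarrow> continuous_on A h \<and>
     (\<forall>a R. 0 < R \<longrightarrow> cball a (R * real CARD('n)) \<subseteq> A \<longrightarrow>
        integral (cbox (-1) 1) (\<lambda>y. h (a + R *\<^sub>R y) * rho y) = h a * cr TYPE('n))"

lemma cr_pos: "cr TYPE('n::finite) > 0"
proof -
  let ?C = "cbox (-1) (1::real^'n)"
  have c: "continuous_on ?C rho" by (rule continuous_rho)
  have ne: "box (-1) (1::real^'n) \<noteq> {}"
  proof -
    have "(0::real^'n) \<in> box (-1) 1" by (simp add: mem_box_cart)
    then show ?thesis by auto
  qed
  have z: "(0::real^'n) \<in> ?C" by (simp add: mem_box_cart)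
  have nn: "\<And>x. x \<in> ?C \<Longrightarrow> rho x \<ge> 0" by (simp add: rho_nonneg)
  have nz: "\<not> (\<forall>x\<in>?C. rho x = 0)"
  proof
    assume "\<forall>x\<in>?C. rho x = 0"
    then have "rho (0::real^'n) = 0" using z by blast
    then show False using rho_pos[of "0::real^'n"] by simp
  qed
  have "integral ?C rho \<noteq> 0"
    using integral_cbox_eq_0_iff[OF c ne nn] nz by simp
  moreover have "integral ?C rho \<ge> 0"
    by (rule integral_nonneg) (auto intro: integrable_continuous c rho_nonneg)
  ultimately show ?thesis by (simp add: cr_def)
qed

lemma mem_cbox_sym: "(z::real^'n) \<in> cbox (c - r *\<^sub>R 1) (c + r *\<^sub>R 1) \<longleftrightarrow> (\<forall>i. \<bar>z$i - c$i\<bar> \<le> r)"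
  by (auto simp: mem_box_cart abs_le_iff algebra_simps)

lemma cbox_sym_norm:
  fixes z :: "real^'n"
  assumes "z \<in> cbox (c - r *\<^sub>R 1) (c + r *\<^sub>R 1)"
  shows "norm (z - c) \<le> r * real CARD('n)"
proof -
  have "\<bar>(z - c)$i\<bar> \<le> r" for i using assms by (simp add: mem_cbox_sym)
  then have "(\<Sum>i\<in>UNIV. \<bar>(z - c)$i\<bar>) \<le> of_nat (card (UNIV::'n set)) * r"
    by (intro sum_bounded_above) auto
  then show ?thesis using norm_le_l1_cart[of "z - c"] by (simp add: mult.commute)
qed

lemma mvp_cont: "mvp A h \<Longrightarrow> continuous_on A h" by (simp add: mvp_def)

lemma mvp_eq:
  fixes h :: "real^'n \<Rightarrow> real"
  shows "mvp A h \<Longrightarrow> 0 < R \<Longrightarrow> cball a (R * real CARD('n)) \<subseteq> A \<Longrightarrow>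
   integral (cbox (-1) 1) (\<lambda>y. h (a + R *\<^sub>R y) * rho y) = h a * cr TYPE('n)"
  by (simp add: mvp_def)

lemma cube_inA:
  fixes a :: "real^'n"
  assumes "cball a (R * real CARD('n)) \<subseteq> A" "0 \<le> R" "y \<in> cbox (-1) 1"
  shows "a + R *\<^sub>R y \<in> A"
proof -
  have "norm (R *\<^sub>R y) \<le> R * real CARD('n)"
    using assms(2,3) cube_norm[of y] by (auto intro!: mult_left_mono)
  then show ?thesis using assms(1) by (auto simp: dist_norm)
qed

lemma rep:
  fixes h :: "real^'n \<Rightarrow> real"
  assumes m: "mvp A h" and R: "R > 0" and sub: "cball x0 (2 * R * real CARD('n)) \<subseteq> A"
    and x: "x \<in> ball x0 R"
  shows "((\<lambda>z. h z * rho ((1/R) *\<^sub>R (z - x))) has_integral (h x * cr TYPE('n) * R ^ CARD('n)))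
           (cbox (x0 - (2*R) *\<^sub>R 1) (x0 + (2*R) *\<^sub>R 1))"
proof -
  let ?K = "real CARD('n)"
  let ?C = "cbox (-1) (1::real^'n)"
  have K1: "?K \<ge> 1" by (rule card_ge1)
  have hc: "continuous_on A h" using m by (simp add: mvp_def)
  have subx: "cball x (R * ?K) \<subseteq> A"
  proof
    fix z assume "z \<in> cball x (R * ?K)"
    then have "dist x0 z \<le> dist x0 x + dist x z" "dist x z \<le> R * ?K" "dist x0 x < R"
      using x dist_triangle by auto
    moreover have "R \<le> R * ?K" using K1 R by simp
    ultimately have "dist x0 z \<le> 2 * R * ?K" by linarith
    then show "z \<in> A" using sub by auto
  qed
  have mv: "integral ?C (\<lambda>y. h (x + R *\<^sub>R y) * rho y) = h x * cr TYPE('n)"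
    by (rule mvp_eq[OF m R subx])
  have int: "(\<lambda>y. h (x + R *\<^sub>R y) * rho y) integrable_on ?C"
    by (rule integrable_continuous, intro continuous_intros continuous_rho cont_comp_aff[OF hc])
       (use cube_inA[OF subx] R in auto)
  have hasJ: "((\<lambda>y. h (x + R *\<^sub>R y) * rho y) has_integral (h x * cr TYPE('n))) ?C"
    using integrable_integral[OF int] mv by simp
  define f where "f z = h z * rho ((1/R) *\<^sub>R (z - x))" for z
  have feq: "(\<lambda>y. f (R *\<^sub>R y + x)) = (\<lambda>y. h (x + R *\<^sub>R y) * rho y)"
    using R by (auto simp: f_def fun_eq_iff add.commute)
  have box: "cbox ((x - R *\<^sub>R 1 - x) /\<^sub>R R) ((x + R *\<^sub>R 1 - x) /\<^sub>R R) = ?C"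
    using R by simp
  have "((\<lambda>y. f (R *\<^sub>R y + x)) has_integral ((h x * cr TYPE('n) * R ^ CARD('n)) /\<^sub>R R ^ DIM(real^'n)))
          (cbox ((x - R *\<^sub>R 1 - x) /\<^sub>R R) ((x + R *\<^sub>R 1 - x) /\<^sub>R R))"
  proof -
    have eq2: "(h x * cr TYPE('n) * R ^ CARD('n)) /\<^sub>R R ^ DIM(real^'n) = h x * cr TYPE('n)"
      using R by simp
    show ?thesis unfolding eq2 box feq by (rule hasJ)
  qed
  then have small: "(f has_integral (h x * cr TYPE('n) * R ^ CARD('n))) (cbox (x - R *\<^sub>R 1) (x + R *\<^sub>R 1))"
    by (rule has_integral_affinity_iff[OF R, THEN iffD1])
  have "(f has_integral (h x * cr TYPE('n) * R ^ CARD('n))) (cbox (x0 - (2*R) *\<^sub>R 1) (x0 + (2*R) *\<^sub>R 1))"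
  proof (rule has_integral_on_superset[OF small])
    fix z assume z: "z \<notin> cbox (x - R *\<^sub>R 1) (x + R *\<^sub>R 1)"
    have "norm ((1/R) *\<^sub>R (z - x)) \<ge> 1"
    proof (rule ccontr)
      assume "\<not> norm ((1/R) *\<^sub>R (z - x)) \<ge> 1"
      then have n: "norm (z - x) < R" using R by simp
      have "\<bar>z$i - x$i\<bar> \<le> R" for i
        using component_le_norm_cart[of "z - x" i] n by simp
      then show False using z by (simp add: mem_cbox_sym)
    qed
    then show "f z = 0" by (simp add: f_def rho_zero)
  next
    show "cbox (x - R *\<^sub>R 1) (x + R *\<^sub>R 1) \<subseteq> cbox (x0 - (2*R) *\<^sub>R 1) (x0 + (2*R) *\<^sub>R 1)"
    proof
      fix z assume "z \<in> cbox (x - R *\<^sub>R 1) (x + R *\<^sub>R 1)"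
      then have zi: "\<bar>z$i - x$i\<bar> \<le> R" for i by (simp add: mem_cbox_sym)
      have xi: "\<bar>x$i - x0$i\<bar> \<le> R" for i
        using component_le_norm_cart[of "x - x0" i] x by (simp add: dist_norm norm_minus_commute)
      have "\<bar>z$i - x0$i\<bar> \<le> 2*R" for i using zi[of i] xi[of i] by linarith
      then show "z \<in> cbox (x0 - (2*R) *\<^sub>R 1) (x0 + (2*R) *\<^sub>R 1)" by (simp add: mem_cbox_sym)
    qed
  qed
  then show ?thesis unfolding f_def .
qed

definition Bx :: "real^'n \<Rightarrow> real \<Rightarrow> (real^'n) set" where
  "Bx x0 R = cbox (x0 - (2*R) *\<^sub>R 1) (x0 + (2*R) *\<^sub>R 1)"

definition Dk :: "(real^'n \<Rightarrow> real) \<Rightarrow> real^'n \<Rightarrow> real \<Rightarrow> real^'n \<Rightarrow> real^'n \<Rightarrow> real" where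
  "Dk h x0 R e x = - integral (Bx x0 R) (\<lambda>z. h z * (grho ((1/R) *\<^sub>R (z - x)) \<bullet> e))
       / (cr TYPE('n) * R ^ (CARD('n) + 1))"

lemma Bx_sub:
  fixes x0 :: "real^'n"
  assumes "R \<ge> 0"
  shows "Bx x0 R \<subseteq> cball x0 (2 * R * real CARD('n))"
proof
  fix z assume "z \<in> Bx x0 R"
  then have "norm (z - x0) \<le> (2*R) * real CARD('n)" unfolding Bx_def by (rule cbox_sym_norm)
  then show "z \<in> cball x0 (2 * R * real CARD('n))" by (simp add: dist_norm norm_minus_commute)
qed

lemma rep_deriv:
  fixes h :: "real^'n \<Rightarrow> real"
  assumes m: "mvp A h" and R: "R > 0" and sub: "cball x0 (2 * R * real CARD('n)) \<subseteq> A"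
    and e: "norm e \<le> 1" and x: "x \<in> ball x0 (R/2)"
  shows "((\<lambda>t. h (x + t *\<^sub>R e)) has_real_derivative Dk h x0 R e x) (at 0)"
proof -
  let ?B = "cbox (x0 - (2*R) *\<^sub>R 1) (x0 + (2*R) *\<^sub>R 1)"
  let ?N = "CARD('n)"
  have hc: "continuous_on A h" using m by (simp add: mvp_def)
  have BA: "?B \<subseteq> A" using Bx_sub[of R x0] R sub unfolding Bx_def by auto
  have hB: "continuous_on ?B h" using continuous_on_subset[OF hc BA] .
  have cp: "cr TYPE('n) > 0" by (rule cr_pos)
  define g where "g t = integral ?B (\<lambda>z. h z * rho ((1/R) *\<^sub>R (z - (x + t *\<^sub>R e))))" for t
  define w where "w = (-1/R) *\<^sub>R e"
  have inball: "x + t *\<^sub>R e \<in> ball x0 R" if "t \<in> {-R/2..R/2}" for t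
  proof -
    have "\<bar>t\<bar> \<le> R/2" using that by auto
    moreover have "\<bar>t\<bar> * norm e \<le> \<bar>t\<bar>" using e by (simp add: mult_left_le)
    ultimately have "norm (t *\<^sub>R e) \<le> R/2" by simp
    moreover have "dist x (x + t *\<^sub>R e) = norm (t *\<^sub>R e)" by (simp add: dist_norm)
    moreover have "dist x0 (x + t *\<^sub>R e) \<le> dist x0 x + dist x (x + t *\<^sub>R e)"
      by (rule dist_triangle)
    ultimately have "dist x0 (x + t *\<^sub>R e) \<le> dist x0 x + R/2" by linarith
    then show ?thesis using x by auto
  qed
  have geq: "g t = h (x + t *\<^sub>R e) * cr TYPE('n) * R ^ ?N" if "t \<in> {-R/2..R/2}" for t
    unfolding g_def using rep[OF m R sub inball[OF that]] by (rule integral_unique)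
  have dg: "(g has_field_derivative integral ?B (\<lambda>z. h z * (grho ((1/R) *\<^sub>R (z - (x + 0 *\<^sub>R e))) \<bullet> w)))
              (at 0 within {-R/2..R/2})"
    unfolding g_def
  proof (rule leibniz_rule_field_derivative[where fx="\<lambda>t z. h z * (grho ((1/R) *\<^sub>R (z - (x + t *\<^sub>R e))) \<bullet> w)"])
    fix t z
    have "((\<lambda>t. (1/R) *\<^sub>R (z - (x + t *\<^sub>R e))) has_derivative (\<lambda>s. s *\<^sub>R w)) (at t)"
      by (rule has_derivative_eq_rhs, (rule derivative_intros)+) (auto simp: w_def fun_eq_iff algebra_simps)
    from diff_chain_at[OF this rho_deriv]
    have "((\<lambda>t. rho ((1/R) *\<^sub>R (z - (x + t *\<^sub>R e)))) has_derivative
           (\<lambda>s. grho ((1/R) *\<^sub>R (z - (x + t *\<^sub>R e))) \<bullet> (s *\<^sub>R w))) (at t)"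
      by (simp add: o_def)
    then have "((\<lambda>t. h z * rho ((1/R) *\<^sub>R (z - (x + t *\<^sub>R e)))) has_derivative
           (\<lambda>s. h z * (grho ((1/R) *\<^sub>R (z - (x + t *\<^sub>R e))) \<bullet> (s *\<^sub>R w)))) (at t)"
      by (rule has_derivative_mult_right)
    then have "((\<lambda>t. h z * rho ((1/R) *\<^sub>R (z - (x + t *\<^sub>R e)))) has_derivative
           (\<lambda>s. (h z * (grho ((1/R) *\<^sub>R (z - (x + t *\<^sub>R e))) \<bullet> w)) * s)) (at t)"
      by (rule has_derivative_eq_rhs) (simp add: fun_eq_iff algebra_simps)
    then show "((\<lambda>t. h z * rho ((1/R) *\<^sub>R (z - (x + t *\<^sub>R e)))) has_field_derivative
           h z * (grho ((1/R) *\<^sub>R (z - (x + t *\<^sub>R e))) \<bullet> w)) (at t within {-R/2..R/2})"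
      unfolding has_field_derivative_def by (rule has_derivative_at_withinI)
  next
    fix t
    show "(\<lambda>z. h z * rho ((1/R) *\<^sub>R (z - (x + t *\<^sub>R e)))) integrable_on ?B"
      by (rule integrable_continuous, intro continuous_intros hB
            continuous_on_compose2[OF continuous_rho]) auto
  next
    have c1: "continuous_on ({-R/2..R/2} \<times> ?B) (\<lambda>p. h (snd p))"
      by (rule continuous_on_compose2[OF hB]) (auto intro!: continuous_intros)
    have c2: "continuous_on ({-R/2..R/2} \<times> ?B) (\<lambda>p. grho ((1/R) *\<^sub>R (snd p - (x + fst p *\<^sub>R e))))"
      by (rule continuous_on_compose2[OF continuous_grho]) (auto intro!: continuous_intros)
    show "continuous_on ({-R/2..R/2} \<times> ?B) (\<lambda>(t, z). h z * (grho ((1/R) *\<^sub>R (z - (x + t *\<^sub>R e))) \<bullet> w))"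
      unfolding split_def by (intro continuous_intros c1 c2)
  qed (use R in auto)
  have at0: "at (0::real) within {-R/2..R/2} = at 0"
    by (rule at_within_interior) (use R in simp)
  define D where "D = integral ?B (\<lambda>z. h z * (grho ((1/R) *\<^sub>R (z - x)) \<bullet> w))"
  have dg': "(g has_field_derivative D) (at 0)" using dg at0 by (simp add: D_def)
  have "((\<lambda>t. g t / (cr TYPE('n) * R ^ ?N)) has_field_derivative D / (cr TYPE('n) * R ^ ?N)) (at 0)"
    by (rule DERIV_cdivide[OF dg'])
  then have dh: "((\<lambda>t. h (x + t *\<^sub>R e)) has_field_derivative D / (cr TYPE('n) * R ^ ?N)) (at 0)"
  proof (rule has_field_derivative_transform_within_open[where S="{-R/2<..<R/2}"])
    fix t :: real assume "t \<in> {-R/2<..<R/2}"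
    then have "t \<in> {-R/2..R/2}" by auto
    then show "g t / (cr TYPE('n) * R ^ ?N) = h (x + t *\<^sub>R e)"
      using geq cp R by simp
  qed (use R in auto)
  have "D = (-1/R) * integral ?B (\<lambda>z. h z * (grho ((1/R) *\<^sub>R (z - x)) \<bullet> e))"
    unfolding D_def w_def by (simp add: integral_mult_right[symmetric] algebra_simps)
  then have "D / (cr TYPE('n) * R ^ ?N) = Dk h x0 R e x"
    using R cp by (simp add: Dk_def Bx_def field_simps)
  with dh show ?thesis by simp
qed

definition Dd :: "(real^'n \<Rightarrow> real) \<Rightarrow> real^'n \<Rightarrow> real^'n \<Rightarrow> real" where
  "Dd h e x = deriv (\<lambda>t. h (x + t *\<^sub>R e)) 0"

lemma exists_R:
  fixes x :: "real^'n"
  assumes "open A" "x \<in> A"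
  obtains R where "R > 0" "cball x (2 * R * real CARD('n)) \<subseteq> A"
proof -
  obtain \<epsilon> where \<epsilon>: "\<epsilon> > 0" "cball x \<epsilon> \<subseteq> A" using open_contains_cball assms by blast
  have K: "real CARD('n) \<ge> 1" by (rule card_ge1)
  define R where "R = \<epsilon> / (2 * real CARD('n))"
  have "R > 0" using \<epsilon> K by (simp add: R_def)
  moreover have "2 * R * real CARD('n) = \<epsilon>" using K by (simp add: R_def)
  ultimately show ?thesis using that \<epsilon> by auto
qed

lemma Dd_eq_Dk:
  fixes h :: "real^'n \<Rightarrow> real"
  assumes m: "mvp A h" and R: "R > 0" and sub: "cball x0 (2 * R * real CARD('n)) \<subseteq> A"
    and e: "norm e \<le> 1" and x: "x \<in> ball x0 (R/2)"
  shows "Dd h e x = Dk h x0 R e x"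
  unfolding Dd_def by (rule DERIV_imp_deriv[OF rep_deriv[OF m R sub e x]])

lemma Dd_deriv:
  fixes h :: "real^'n \<Rightarrow> real"
  assumes m: "mvp A h" and A: "open A" and e: "norm e \<le> 1" and x: "x \<in> A"
  shows "((\<lambda>t. h (x + t *\<^sub>R e)) has_real_derivative Dd h e x) (at 0)"
proof -
  obtain R where R: "R > 0" "cball x (2 * R * real CARD('n)) \<subseteq> A" using exists_R[OF A x] by blast
  have xb: "x \<in> ball x (R/2)" using R by simp
  show ?thesis using rep_deriv[OF m R e xb] Dd_eq_Dk[OF m R e xb] by simp
qed

lemma Dk_cont:
  fixes h :: "real^'n \<Rightarrow> real"
  assumes m: "mvp A h" and R: "R > 0" and sub: "cball x0 (2 * R * real CARD('n)) \<subseteq> A"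
  shows "continuous_on U (Dk h x0 R e)"
proof -
  have hc: "continuous_on A h" using m by (simp add: mvp_def)
  have BA: "Bx x0 R \<subseteq> A" using Bx_sub[of R x0] R sub by auto
  have hB: "continuous_on (Bx x0 R) h" using continuous_on_subset[OF hc BA] .
  have c1: "continuous_on (U \<times> Bx x0 R) (\<lambda>p. h (snd p))"
    by (rule continuous_on_compose2[OF hB]) (auto intro!: continuous_intros)
  have c2: "continuous_on (U \<times> Bx x0 R) (\<lambda>p. grho ((1/R) *\<^sub>R (snd p - fst p)))"
    by (rule continuous_on_compose2[OF continuous_grho]) (auto intro!: continuous_intros)
  have "continuous_on (U \<times> Bx x0 R) (\<lambda>(x, z). h z * (grho ((1/R) *\<^sub>R (z - x)) \<bullet> e))"
    unfolding split_def by (intro continuous_intros c1 c2)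
  then have "continuous_on U (\<lambda>x. integral (Bx x0 R) (\<lambda>z. h z * (grho ((1/R) *\<^sub>R (z - x)) \<bullet> e)))"
    unfolding Bx_def by (rule integral_continuous_on_param)
  then show ?thesis unfolding Dk_def[abs_def]
    by (intro continuous_intros) (use R cr_pos[where 'n='n] in auto)
qed

lemma Dd_cont:
  fixes h :: "real^'n \<Rightarrow> real"
  assumes m: "mvp A h" and A: "open A" and e: "norm e \<le> 1"
  shows "continuous_on A (Dd h e)"
proof -
  have "isCont (Dd h e) x0" if x0: "x0 \<in> A" for x0
  proof -
    obtain R where R: "R > 0" "cball x0 (2 * R * real CARD('n)) \<subseteq> A" using exists_R[OF A x0] by blast
    have "continuous_on (ball x0 (R/2)) (Dk h x0 R e)" by (rule Dk_cont[OF m R])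
    then have "continuous_on (ball x0 (R/2)) (Dd h e)"
      by (rule continuous_on_eq) (use Dd_eq_Dk[OF m R e] in auto)
    then show ?thesis using R(1) by (simp add: continuous_on_eq_continuous_at)
  qed
  then show ?thesis by (simp add: continuous_at_imp_continuous_on)
qed

lemma grho_norm: "norm (grho y) \<le> 4"
proof (cases "norm y < 1")
  case True
  have m1: "mp (y \<bullet> y) \<le> 1" by (simp add: mp_def)
  have "norm (grho y) = 4 * mp (y \<bullet> y) * norm y" by (simp add: grho_def mp_nonneg)
  also have "\<dots> \<le> 4 * 1 * 1"
    using m1 True mp_nonneg by (intro mult_mono) auto
  finally show ?thesis by simp
next
  case False
  then show ?thesis by (simp add: grho_zero)
qed

lemma Dd_bound:
  fixes h :: "real^'n \<Rightarrow> real"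
  assumes m: "mvp A h" and R: "R > 0" and sub: "cball x0 (2 * R * real CARD('n)) \<subseteq> A"
    and e: "norm e \<le> 1" and M: "\<And>z. z \<in> cball x0 (2 * R * real CARD('n)) \<Longrightarrow> \<bar>h z\<bar> \<le> M"
  shows "\<bar>Dd h e x0\<bar> \<le> 4 ^ (CARD('n) + 1) / cr TYPE('n) * M / R"
proof -
  let ?N = "CARD('n)"
  let ?B = "Bx x0 R"
  have hc: "continuous_on A h" using m by (simp add: mvp_def)
  have BA: "?B \<subseteq> cball x0 (2 * R * real CARD('n))" using Bx_sub[of R x0] R by auto
  have hB: "continuous_on ?B h" using continuous_on_subset[OF hc] BA sub by blast
  have cp: "cr TYPE('n) > 0" by (rule cr_pos)
  have M0: "M \<ge> 0" using M[of x0] R by auto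
  have int: "(\<lambda>z. h z * (grho ((1/R) *\<^sub>R (z - x0)) \<bullet> e)) integrable_on ?B"
    unfolding Bx_def
    by (rule integrable_continuous, intro continuous_intros hB[unfolded Bx_def]
          continuous_on_compose2[OF continuous_grho]) auto
  have bnd: "norm (h z * (grho ((1/R) *\<^sub>R (z - x0)) \<bullet> e)) \<le> 4 * M" if z: "z \<in> ?B" for z
  proof -
    have "\<bar>grho ((1/R) *\<^sub>R (z - x0)) \<bullet> e\<bar> \<le> norm (grho ((1/R) *\<^sub>R (z - x0))) * norm e"
      by (rule Cauchy_Schwarz_ineq2)
    also have "\<dots> \<le> 4 * 1" using grho_norm e by (intro mult_mono) auto
    finally have g: "\<bar>grho ((1/R) *\<^sub>R (z - x0)) \<bullet> e\<bar> \<le> 4" by simp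
    have hz: "\<bar>h z\<bar> \<le> M" using M BA z by auto
    have "\<bar>h z\<bar> * \<bar>grho ((1/R) *\<^sub>R (z - x0)) \<bullet> e\<bar> \<le> M * 4"
      by (intro mult_mono hz g) (auto simp: M0)
    then show ?thesis by (simp add: abs_mult mult.commute)
  qed
  have "x0 \<in> ?B" using R by (simp add: Bx_def mem_cbox_sym)
  then have ne: "?B \<noteq> {}" by auto
  have cont: "Henstock_Kurzweil_Integration.content ?B = (4 * R) ^ ?N"
    using ne by (simp add: Bx_def content_cbox_cart)
  have "norm (integral ?B (\<lambda>z. h z * (grho ((1/R) *\<^sub>R (z - x0)) \<bullet> e))) \<le> (4 * M) * Henstock_Kurzweil_Integration.content ?B"
    by (rule has_integral_bound[of "4 * M" _ _ "x0 - (2*R) *\<^sub>R 1" "x0 + (2*R) *\<^sub>R 1", folded Bx_def])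
       (use M0 integrable_integral[OF int] bnd in auto)
  then have I: "\<bar>integral ?B (\<lambda>z. h z * (grho ((1/R) *\<^sub>R (z - x0)) \<bullet> e))\<bar> \<le> 4 * M * (4 * R) ^ ?N"
    by (simp add: cont)
  have x0b: "x0 \<in> ball x0 (R/2)" using R by simp
  have "\<bar>Dd h e x0\<bar> = \<bar>integral ?B (\<lambda>z. h z * (grho ((1/R) *\<^sub>R (z - x0)) \<bullet> e))\<bar> / (cr TYPE('n) * R ^ (?N + 1))"
    using Dd_eq_Dk[OF m R sub e x0b] cp R by (simp add: Dk_def abs_divide abs_mult)
  also have "\<dots> \<le> 4 * M * (4 * R) ^ ?N / (cr TYPE('n) * R ^ (?N + 1))"
    using cp R by (intro divide_right_mono I) auto
  also have "\<dots> = 4 ^ (?N + 1) / cr TYPE('n) * M / R"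
    using cp R by (simp add: field_simps power_mult_distrib)
  finally show ?thesis .
qed

lemma Dd_deriv_at:
  fixes h :: "real^'n \<Rightarrow> real"
  assumes m: "mvp A h" and A: "open A" and e: "norm e \<le> 1" and p: "p + t *\<^sub>R e \<in> A"
  shows "((\<lambda>s. h (p + s *\<^sub>R e)) has_real_derivative Dd h e (p + t *\<^sub>R e)) (at t)"
proof -
  have d: "((\<lambda>s. h (p + t *\<^sub>R e + s *\<^sub>R e)) has_real_derivative Dd h e (p + t *\<^sub>R e)) (at 0)"
    by (rule Dd_deriv[OF m A e p])
  have eqf: "(\<lambda>s. h (p + (s + t) *\<^sub>R e)) = (\<lambda>s. h (p + t *\<^sub>R e + s *\<^sub>R e))"
    by (simp add: scaleR_add_left add_ac)
  from d have "((\<lambda>s. h (p + (s + t) *\<^sub>R e)) has_real_derivative Dd h e (p + t *\<^sub>R e)) (at 0)"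
    by (simp only: eqf)
  then have "((\<lambda>s. h (p + s *\<^sub>R e)) has_real_derivative Dd h e (p + t *\<^sub>R e)) (at (0 + t))"
    by (rule DERIV_shift[THEN iffD2])
  then show ?thesis by simp
qed

lemma Dd_mvp:
  fixes h :: "real^'n \<Rightarrow> real"
  assumes m: "mvp A h" and A: "open A" and e: "norm e \<le> 1"
  shows "mvp A (Dd h e)"
  unfolding mvp_def
proof (intro conjI allI impI)
  show "continuous_on A (Dd h e)" by (rule Dd_cont[OF m A e])
  fix a R assume R: "0 < R" and sub: "cball a (R * real CARD('n)) \<subseteq> A"
  let ?K = "real CARD('n)"
  let ?C = "cbox (-1) (1::real^'n)"
  obtain \<delta> where \<delta>: "\<delta> > 0" "(\<Union>x\<in>cball a (R * ?K). cball x \<delta>) \<subseteq> A"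
    using compact_subset_open_imp_cball_epsilon_subset[OF compact_cball A sub] by blast
  have te: "norm (t *\<^sub>R e) \<le> \<delta>" if t: "t \<in> {-\<delta>..\<delta>}" for t
  proof -
    have "\<bar>t\<bar> * norm e \<le> \<bar>t\<bar>" using e by (simp add: mult_left_le)
    moreover have "\<bar>t\<bar> \<le> \<delta>" using t by auto
    ultimately show ?thesis by simp
  qed
  have inA: "a + R *\<^sub>R y + t *\<^sub>R e \<in> A" if t: "t \<in> {-\<delta>..\<delta>}" and y: "y \<in> ?C" for t y
  proof -
    have "norm (R *\<^sub>R y) \<le> R * ?K" using cube_norm[OF y] R by (simp add: mult_left_mono)
    then have "a + R *\<^sub>R y \<in> cball a (R * ?K)" by (simp add: dist_norm)
    moreover have "a + R *\<^sub>R y + t *\<^sub>R e \<in> cball (a + R *\<^sub>R y) \<delta>"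
      using te[OF t] by (simp add: dist_norm)
    ultimately show ?thesis using \<delta>(2) by blast
  qed
  have subt: "cball (a + t *\<^sub>R e) (R * ?K) \<subseteq> A" if t: "t \<in> {-\<delta>..\<delta>}" for t
  proof
    fix z assume z: "z \<in> cball (a + t *\<^sub>R e) (R * ?K)"
    have "dist a (z - t *\<^sub>R e) = dist (a + t *\<^sub>R e) z"
      by (simp add: dist_norm algebra_simps)
    then have "z - t *\<^sub>R e \<in> cball a (R * ?K)" using z by simp
    moreover have "z \<in> cball (z - t *\<^sub>R e) \<delta>" using te[OF t] by (simp add: dist_norm)
    ultimately show "z \<in> A" using \<delta>(2) by blast
  qed
  have aA: "a \<in> A" using sub R by auto
  define Phi where "Phi t = integral ?C (\<lambda>y. h (a + R *\<^sub>R y + t *\<^sub>R e) * rho y)" for t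
  have Phi_eq: "Phi t = cr TYPE('n) * h (a + t *\<^sub>R e)" if t: "t \<in> {-\<delta>..\<delta>}" for t
  proof -
    have "integral ?C (\<lambda>y. h (a + t *\<^sub>R e + R *\<^sub>R y) * rho y) = h (a + t *\<^sub>R e) * cr TYPE('n)"
      by (rule mvp_eq[OF m R subt[OF t]])
    then show ?thesis by (simp add: Phi_def add_ac mult.commute)
  qed
  have hc: "continuous_on A h" using m by (simp add: mvp_def)
  have Dc: "continuous_on A (Dd h e)" by (rule Dd_cont[OF m A e])
  have dPhi: "(Phi has_field_derivative integral ?C (\<lambda>y. Dd h e (a + R *\<^sub>R y + 0 *\<^sub>R e) * rho y))
                (at 0 within {-\<delta>..\<delta>})"
    unfolding Phi_def
  proof (rule leibniz_rule_field_derivative)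
    fix t y assume t: "t \<in> {-\<delta>..\<delta>}" and y: "y \<in> ?C"
    have "((\<lambda>s. h (a + R *\<^sub>R y + s *\<^sub>R e)) has_real_derivative Dd h e (a + R *\<^sub>R y + t *\<^sub>R e)) (at t)"
      by (rule Dd_deriv_at[OF m A e inA[OF t y]])
    then have "((\<lambda>s. h (a + R *\<^sub>R y + s *\<^sub>R e) * rho y) has_real_derivative Dd h e (a + R *\<^sub>R y + t *\<^sub>R e) * rho y) (at t)"
      by (rule DERIV_cmult_right)
    then show "((\<lambda>s. h (a + R *\<^sub>R y + s *\<^sub>R e) * rho y) has_real_derivative Dd h e (a + R *\<^sub>R y + t *\<^sub>R e) * rho y) (at t within {-\<delta>..\<delta>})"
      by (rule has_field_derivative_at_within)
  next
    fix t assume t: "t \<in> {-\<delta>..\<delta>}"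
    have "continuous_on ?C (\<lambda>y. h (a + R *\<^sub>R y + t *\<^sub>R e))"
      by (rule continuous_on_compose2[OF hc]) (use inA[OF t] in \<open>auto intro!: continuous_intros\<close>)
    then show "(\<lambda>y. h (a + R *\<^sub>R y + t *\<^sub>R e) * rho y) integrable_on ?C"
      by (intro integrable_continuous continuous_intros continuous_rho)
  next
    have c1: "continuous_on ({-\<delta>..\<delta>} \<times> ?C) (\<lambda>p. Dd h e (a + R *\<^sub>R snd p + fst p *\<^sub>R e))"
      by (rule continuous_on_compose2[OF Dc]) (use inA in \<open>auto intro!: continuous_intros\<close>)
    have c2: "continuous_on ({-\<delta>..\<delta>} \<times> ?C) (\<lambda>p. rho (snd p))"
      by (rule continuous_on_compose2[OF continuous_rho]) (auto intro!: continuous_intros)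
    show "continuous_on ({-\<delta>..\<delta>} \<times> ?C) (\<lambda>(t, y). Dd h e (a + R *\<^sub>R y + t *\<^sub>R e) * rho y)"
      unfolding split_def by (intro continuous_intros c1 c2)
  qed (use \<delta> in auto)
  have at0: "at (0::real) within {-\<delta>..\<delta>} = at 0"
    by (rule at_within_interior) (use \<delta> in simp)
  have d1: "(Phi has_field_derivative integral ?C (\<lambda>y. Dd h e (a + R *\<^sub>R y) * rho y)) (at 0)"
    using dPhi at0 by simp
  have "((\<lambda>t. cr TYPE('n) * h (a + t *\<^sub>R e)) has_real_derivative cr TYPE('n) * Dd h e a) (at 0)"
    using DERIV_cmult[OF Dd_deriv[OF m A e aA], of "cr TYPE('n)"] by simp
  then have d2: "(Phi has_field_derivative cr TYPE('n) * Dd h e a) (at 0)"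
  proof (rule has_field_derivative_transform_within_open[where S="{-\<delta><..<\<delta>}"])
    fix t :: real assume "t \<in> {-\<delta><..<\<delta>}"
    then show "cr TYPE('n) * h (a + t *\<^sub>R e) = Phi t" using Phi_eq[of t] by simp
  qed (use \<delta> in auto)
  show "integral ?C (\<lambda>y. Dd h e (a + R *\<^sub>R y) * rho y) = Dd h e a * cr TYPE('n)"
    using DERIV_unique[OF d1 d2] by simp
qed

definition Dn :: "(real^'n \<Rightarrow> real) \<Rightarrow> real^'n \<Rightarrow> nat \<Rightarrow> real^'n \<Rightarrow> real" where
  "Dn h e k = ((\<lambda>f. Dd f e) ^^ k) h"

lemma Dn_0[simp]: "Dn h e 0 = h" by (simp add: Dn_def)
lemma Dn_Suc: "Dn h e (Suc k) = Dd (Dn h e k) e" by (simp add: Dn_def)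

lemma Dn_mvp:
  fixes h :: "real^'n \<Rightarrow> real"
  assumes m: "mvp A h" and A: "open A" and e: "norm e \<le> 1"
  shows "mvp A (Dn h e k)"
  by (induction k) (simp_all add: m Dn_Suc Dd_mvp[OF _ A e])

lemma pow_fact_le_exp:
  assumes "0 \<le> (x::real)"
  shows "x ^ n / fact n \<le> exp x"
proof -
  have s: "summable (\<lambda>m. x ^ m / fact m)"
    using summable_exp[of x] by (simp add: divide_inverse mult.commute)
  have "x ^ n / fact n \<le> (\<Sum>m<Suc n. x ^ m / fact m)"
    using assms by (simp add: sum_nonneg)
  also have "\<dots> \<le> (\<Sum>m. x ^ m / fact m)"
    by (rule sum_le_suminf[OF s]) (use assms in auto)
  also have "\<dots> = exp x" by (simp add: exp_def divide_inverse mult.commute)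
  finally show ?thesis .
qed

lemma Dn_bound:
  fixes h :: "real^'n \<Rightarrow> real"
  assumes m: "mvp A h" and A: "open A" and e: "norm e \<le> 1" and r: "r > 0"
    and sub: "cball x (2 * r * real CARD('n)) \<subseteq> A"
    and M: "\<And>z. z \<in> cball x (2 * r * real CARD('n)) \<Longrightarrow> \<bar>h z\<bar> \<le> M"
  shows "\<bar>Dn h e k x\<bar> \<le> (4 ^ (CARD('n)+1) / cr TYPE('n) * real k / r) ^ k * M"
proof (cases "k = 0")
  case True
  then show ?thesis using M[of x] r by simp
next
  case False
  let ?K = "real CARD('n)"
  let ?C = "4 ^ (CARD('n)+1) / cr TYPE('n)"
  define s where "s = r / real k"
  have s: "s > 0" using r False by (simp add: s_def)
  have ks: "real k * s = r" using False by (simp add: s_def)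
  have K0: "?K \<ge> 0" by simp
  have claim: "j \<le> k \<Longrightarrow> \<forall>z. dist x z \<le> 2 * (real k - real j) * s * ?K \<longrightarrow> \<bar>Dn h e j z\<bar> \<le> (?C / s) ^ j * M" for j
  proof (induction j)
    case 0
    show ?case
    proof (intro allI impI)
      fix z assume "dist x z \<le> 2 * (real k - real 0) * s * ?K"
      then have "dist x z \<le> 2 * r * ?K" using ks by (simp add: mult.assoc)
      then show "\<bar>Dn h e 0 z\<bar> \<le> (?C / s) ^ 0 * M" using M by simp
    qed
  next
    case (Suc j)
    then have jk: "j \<le> k" by simp
    have IH: "\<And>w. dist x w \<le> 2 * (real k - real j) * s * ?K \<Longrightarrow> \<bar>Dn h e j w\<bar> \<le> (?C / s) ^ j * M"
      using Suc.IH[OF jk] by blast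
    show ?case
    proof (intro allI impI)
      fix z assume dz: "dist x z \<le> 2 * (real k - real (Suc j)) * s * ?K"
      have near: "dist x w \<le> 2 * (real k - real j) * s * ?K" if w: "w \<in> cball z (2 * s * ?K)" for w
      proof -
        have "dist x w \<le> dist x z + dist z w" by (rule dist_triangle)
        also have "\<dots> \<le> 2 * (real k - real (Suc j)) * s * ?K + 2 * s * ?K" using dz w by simp
        also have "\<dots> = 2 * (real k - real j) * s * ?K" by (simp add: algebra_simps)
        finally show ?thesis .
      qed
      have subz: "cball z (2 * s * ?K) \<subseteq> A"
      proof
        fix w assume w: "w \<in> cball z (2 * s * ?K)"
        have a1: "2 * (real k - real j) * s * ?K \<le> 2 * real k * s * ?K"
          using s K0 by (intro mult_right_mono) auto
        have a2: "2 * real k * s * ?K = 2 * r * ?K" using ks by (metis mult.assoc)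
        have "dist x w \<le> 2 * r * ?K" using near[OF w] a1 a2 by linarith
        then show "w \<in> A" using sub by auto
      qed
      have mj: "mvp A (Dn h e j)" by (rule Dn_mvp[OF m A e])
      have "\<bar>Dd (Dn h e j) e z\<bar> \<le> ?C * ((?C / s) ^ j * M) / s"
        by (rule Dd_bound[OF mj s subz e]) (use IH near in auto)
      also have "\<dots> = (?C / s) ^ Suc j * M" using s by (simp add: field_simps)
      finally show "\<bar>Dn h e (Suc j) z\<bar> \<le> (?C / s) ^ Suc j * M" by (simp add: Dn_Suc)
    qed
  qed
  have "\<bar>Dn h e k x\<bar> \<le> (?C / s) ^ k * M" using claim[of k] by simp
  moreover have "?C / s = ?C * real k / r" using False r by (simp add: s_def field_simps)
  ultimately show ?thesis by simp
qed

lemma Dn_zero: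
  fixes h :: "real^'n \<Rightarrow> real"
  assumes eps: "\<epsilon> > 0" and z: "\<forall>w\<in>ball z \<epsilon>. h w = 0" and e: "norm e \<le> 1"
  shows "\<forall>w\<in>ball z \<epsilon>. Dn h e k w = 0"
proof (induction k)
  case 0
  then show ?case using z by simp
next
  case (Suc k)
  show ?case
  proof
    fix w assume w: "w \<in> ball z \<epsilon>"
    define \<eta> where "\<eta> = \<epsilon> - dist z w"
    have \<eta>: "\<eta> > 0" using w by (simp add: \<eta>_def)
    have "((\<lambda>t. Dn h e k (w + t *\<^sub>R e)) has_real_derivative 0) (at 0)"
    proof (rule has_field_derivative_transform_within_open[where S="ball 0 \<eta>"])
      show "((\<lambda>t. 0) has_real_derivative 0) (at 0)" by simp
      fix t :: real assume t: "t \<in> ball 0 \<eta>"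
      have "norm (t *\<^sub>R e) \<le> \<bar>t\<bar>" using e by (simp add: mult_left_le)
      then have "dist w (w + t *\<^sub>R e) < \<eta>" using t by (simp add: dist_norm)
      then have "dist z (w + t *\<^sub>R e) < \<epsilon>"
        using dist_triangle[of z "w + t *\<^sub>R e" w] by (simp add: \<eta>_def)
      then show "0 = Dn h e k (w + t *\<^sub>R e)" using Suc by simp
    qed (use \<eta> in auto)
    then show "Dn h e (Suc k) w = 0"
      by (simp add: Dn_Suc Dd_def DERIV_imp_deriv)
  qed
qed

lemma taylor_zero:
  fixes h :: "real^'n \<Rightarrow> real"
  assumes m: "mvp A h" and A: "open A" and e: "norm e \<le> 1" and tau: "\<tau> > 0"
    and path: "\<And>s. s \<in> {0..\<tau>} \<Longrightarrow> z + s *\<^sub>R e \<in> A"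
    and zero: "\<And>k. Dn h e k z = 0"
    and bnd: "\<And>k s. s \<in> {0..\<tau>} \<Longrightarrow> \<bar>Dn h e k (z + s *\<^sub>R e)\<bar> \<le> (C * real k / r) ^ k * M"
    and C: "C > 0" and r: "r > 0" and small: "2 * C * \<tau> * exp 1 \<le> r"
  shows "h (z + \<tau> *\<^sub>R e) = 0"
proof -
  have M0: "M \<ge> 0" using bnd[of 0 0] tau by simp
  have bk: "\<bar>h (z + \<tau> *\<^sub>R e)\<bar> \<le> M * (1/2) ^ k" if k: "k > 0" for k
  proof -
    define diff where "diff m s = Dn h e m (z + s *\<^sub>R e)" for m s
    have d0: "diff 0 = (\<lambda>s. h (z + s *\<^sub>R e))" by (simp add: diff_def fun_eq_iff)
    have dS: "\<forall>m t. m < k \<and> 0 \<le> t \<and> t \<le> \<tau> \<longrightarrow> DERIV (diff m) t :> diff (Suc m) t"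
    proof (intro allI impI)
      fix m t assume "m < k \<and> 0 \<le> t \<and> t \<le> \<tau>"
      then have t: "t \<in> {0..\<tau>}" by simp
      have "((\<lambda>s. Dn h e m (z + s *\<^sub>R e)) has_real_derivative Dd (Dn h e m) e (z + t *\<^sub>R e)) (at t)"
        by (rule Dd_deriv_at[OF Dn_mvp[OF m A e] A e path[OF t]])
      then show "DERIV (diff m) t :> diff (Suc m) t"
        by (simp add: diff_def[abs_def] Dn_Suc)
    qed
    obtain t where t: "0 < t" "t < \<tau>"
      and eq: "h (z + \<tau> *\<^sub>R e) = (\<Sum>m<k. diff m 0 / fact m * \<tau> ^ m) + diff k t / fact k * \<tau> ^ k"
      using Maclaurin[OF tau k d0 dS] by auto
    have "(\<Sum>m<k. diff m 0 / fact m * \<tau> ^ m) = 0" by (simp add: diff_def zero)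
    with eq have eq2: "h (z + \<tau> *\<^sub>R e) = diff k t / fact k * \<tau> ^ k" by simp
    have "\<bar>diff k t\<bar> \<le> (C * real k / r) ^ k * M" using bnd[of t k] t by (simp add: diff_def)
    then have "\<bar>h (z + \<tau> *\<^sub>R e)\<bar> \<le> (C * real k / r) ^ k * M / fact k * \<tau> ^ k"
      using eq2 tau by (simp add: abs_mult abs_divide divide_right_mono mult_right_mono)
    also have "\<dots> = M * (C * \<tau> / r) ^ k * (real k ^ k / fact k)"
      by (simp add: field_simps power_mult_distrib power_divide)
    also have "\<dots> \<le> M * (C * \<tau> / r) ^ k * exp (real k)"
      using M0 C tau r pow_fact_le_exp[of "real k" k]
      by (intro mult_left_mono) (auto intro!: mult_nonneg_nonneg)
    also have "\<dots> = M * (C * \<tau> * exp 1 / r) ^ k"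
      using exp_of_nat_mult[of k "1::real"] by (simp add: power_mult_distrib field_simps)
    also have "\<dots> \<le> M * (1/2) ^ k"
    proof -
      have "C * \<tau> * exp 1 / r \<le> 1/2" using small r by (simp add: field_simps)
      moreover have "0 \<le> C * \<tau> * exp 1 / r" using C tau r by simp
      ultimately show ?thesis using M0 by (intro mult_left_mono power_mono) auto
    qed
    finally show ?thesis .
  qed
  have lim: "(\<lambda>k. M * (1/2::real) ^ Suc k) \<longlonglongrightarrow> 0"
    by (rule tendsto_mult_right_zero, rule LIMSEQ_Suc, rule LIMSEQ_realpow_zero) auto
  have "\<bar>h (z + \<tau> *\<^sub>R e)\<bar> \<le> 0"
  proof (rule LIMSEQ_le_const[OF lim])
    show "\<exists>N. \<forall>n\<ge>N. \<bar>h (z + \<tau> *\<^sub>R e)\<bar> \<le> M * (1/2) ^ Suc n"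
      using bk by blast
  qed
  then show ?thesis by simp
qed

lemma uc:
  fixes h :: "real^'n \<Rightarrow> real"
  assumes m: "mvp A h" and A: "open A" and conn: "connected A" and a: "a \<in> A"
    and eps: "\<epsilon> > 0" and z0: "\<forall>y\<in>ball a \<epsilon>. h y = 0"
  shows "\<forall>x\<in>A. h x = 0"
proof -
  let ?K = "real CARD('n)"
  let ?C = "4 ^ (CARD('n)+1) / cr TYPE('n)"
  have hc: "continuous_on A h" using m by (simp add: mvp_def)
  have C0: "?C > 0" using cr_pos[where 'n='n] by simp
  have K1: "?K \<ge> 1" by (rule card_ge1)
  define Z where "Z = {x\<in>A. \<exists>\<epsilon>>0. \<forall>y\<in>ball x \<epsilon>. h y = 0}"
  have aZ: "a \<in> Z" using a eps z0 by (auto simp: Z_def)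
  have openZ: "open Z"
  proof (rule openI)
    fix x assume "x \<in> Z"
    then obtain \<epsilon>1 where x: "x \<in> A" "\<epsilon>1 > 0" "\<forall>y\<in>ball x \<epsilon>1. h y = 0" by (auto simp: Z_def)
    obtain \<delta> where \<delta>: "\<delta> > 0" "ball x \<delta> \<subseteq> A" using A x(1) open_contains_ball by blast
    define \<mu> where "\<mu> = min \<epsilon>1 \<delta>"
    have "ball x \<mu> \<subseteq> Z"
    proof
      fix y assume y: "y \<in> ball x \<mu>"
      have "y \<in> A" using y \<delta> by (auto simp: \<mu>_def)
      moreover have "\<forall>w\<in>ball y (\<mu> - dist x y). h w = 0"
      proof
        fix w assume "w \<in> ball y (\<mu> - dist x y)"
        then have "dist x w < \<epsilon>1" using dist_triangle[of x w y] by (simp add: \<mu>_def)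
        then show "h w = 0" using x(3) by simp
      qed
      moreover have "\<mu> - dist x y > 0" using y by simp
      ultimately show "y \<in> Z" unfolding Z_def by blast
    qed
    moreover have "\<mu> > 0" using x \<delta> by (simp add: \<mu>_def)
    ultimately show "\<exists>e>0. ball x e \<subseteq> Z" by blast
  qed
  have closure_claim: "p \<in> Z" if p: "p \<in> A" "p \<in> closure Z" for p
  proof -
    obtain R0 where R0: "R0 > 0" "cball p (2 * R0 * ?K) \<subseteq> A" using exists_R[OF A p(1)] by blast
    define r where "r = R0 / 2"
    have r: "r > 0" using R0 by (simp add: r_def)
    have subp: "cball p (4 * r * ?K) \<subseteq> A" using R0 by (simp add: r_def)
    have "compact (h ` cball p (4 * r * ?K))"
      by (rule compact_continuous_image[OF continuous_on_subset[OF hc subp] compact_cball])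
    then obtain M where M: "\<And>z. z \<in> cball p (4 * r * ?K) \<Longrightarrow> \<bar>h z\<bar> \<le> M"
      using compact_imp_bounded[THEN bounded_iff[THEN iffD1]] by force
    define \<tau>0 where "\<tau>0 = min (r * ?K) (r / (2 * ?C * exp 1))"
    have \<tau>0: "\<tau>0 > 0" using r C0 K1 cr_pos[where 'n='n] by (simp add: \<tau>0_def)
    obtain z where z: "z \<in> Z" "dist z p < \<tau>0 / 2"
      using p(2) \<tau>0 closure_approachable[of p Z] by (metis half_gt_zero)
    obtain \<epsilon>z where ez: "\<epsilon>z > 0" "\<forall>y\<in>ball z \<epsilon>z. h y = 0" using z(1) by (auto simp: Z_def)
    have zero_ball: "h y = 0" if y: "y \<in> ball z \<tau>0" for y
    proof (cases "y = z")
      case True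
      then show ?thesis using ez by simp
    next
      case False
      define \<tau> where "\<tau> = dist z y"
      have \<tau>: "\<tau> > 0" "\<tau> < \<tau>0" using False y by (auto simp: \<tau>_def)
      define e where "e = (1/\<tau>) *\<^sub>R (y - z)"
      have ne: "norm e = 1" using \<tau> by (simp add: e_def \<tau>_def dist_norm norm_minus_commute)
      have ye: "y = z + \<tau> *\<^sub>R e" using \<tau> by (simp add: e_def)
      have near: "dist p (z + s *\<^sub>R e) \<le> 2 * r * ?K" if s: "s \<in> {0..\<tau>}" for s
      proof -
        have "dist p (z + s *\<^sub>R e) \<le> dist p z + dist z (z + s *\<^sub>R e)" by (rule dist_triangle)
        also have "dist z (z + s *\<^sub>R e) = s" using s ne by (simp add: dist_norm)
        finally have "dist p (z + s *\<^sub>R e) \<le> dist p z + s" .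
        moreover have "dist p z < \<tau>0 / 2" using z(2) by (simp add: dist_commute)
        moreover have "s \<le> \<tau>0" using s \<tau> by simp
        moreover have "\<tau>0 \<le> r * ?K" by (simp add: \<tau>0_def)
        moreover have "r * ?K \<ge> 0" using r by simp
        ultimately show ?thesis by linarith
      qed
      have subw: "cball (z + s *\<^sub>R e) (2 * r * ?K) \<subseteq> cball p (4 * r * ?K)" if s: "s \<in> {0..\<tau>}" for s
      proof
        fix w assume "w \<in> cball (z + s *\<^sub>R e) (2 * r * ?K)"
        then have "dist p w \<le> dist p (z + s *\<^sub>R e) + dist (z + s *\<^sub>R e) w"
             "dist (z + s *\<^sub>R e) w \<le> 2 * r * ?K"
          using dist_triangle by auto
        then show "w \<in> cball p (4 * r * ?K)" using near[OF s] by simp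
      qed
      have path: "z + s *\<^sub>R e \<in> A" if s: "s \<in> {0..\<tau>}" for s
      proof -
        have "z + s *\<^sub>R e \<in> cball (z + s *\<^sub>R e) (2 * r * ?K)" using r by simp
        then show ?thesis using subw[OF s] subp by blast
      qed
      have zero: "Dn h e k z = 0" for k
        using Dn_zero[OF ez(1) ez(2), of e k] ne ez(1) by simp
      have bnd: "\<bar>Dn h e k (z + s *\<^sub>R e)\<bar> \<le> (?C * real k / r) ^ k * M" if s: "s \<in> {0..\<tau>}" for k s
        by (rule Dn_bound[OF m A _ r]) (use ne subw[OF s] subp M in auto)
      have small: "2 * ?C * \<tau> * exp 1 \<le> r"
      proof -
        have "\<tau> \<le> r / (2 * ?C * exp 1)" using \<tau> by (simp add: \<tau>0_def)
        then show ?thesis using C0 cr_pos[where 'n='n] by (simp add: field_simps)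
      qed
      have "h (z + \<tau> *\<^sub>R e) = 0"
        by (rule taylor_zero[OF m A _ \<tau>(1) path zero bnd C0 r small]) (use ne in auto)
      then show ?thesis using ye by simp
    qed
    have "\<forall>y\<in>ball p (\<tau>0 / 2). h y = 0"
    proof
      fix y assume "y \<in> ball p (\<tau>0 / 2)"
      then have "dist z y < \<tau>0" using z(2) dist_triangle[of z y p] by simp
      then show "h y = 0" using zero_ball by simp
    qed
    then show "p \<in> Z" unfolding Z_def using p(1) \<tau>0 by (auto intro!: exI[of _ "\<tau>0/2"])
  qed
  have ZA: "Z \<subseteq> A" by (auto simp: Z_def)
  have "openin (top_of_set A) Z" using openZ ZA by (auto simp: openin_open intro!: exI[of _ Z])
  moreover have "closedin (top_of_set A) Z"
    unfolding closedin_closed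
  proof (intro exI[of _ "closure Z"] conjI)
    show "closed (closure Z)" by simp
    show "Z = A \<inter> closure Z" using closure_claim ZA closure_subset by blast
  qed
  ultimately have "Z = {} \<or> Z = A" using conn by (simp add: connected_clopen)
  then have "Z = A" using aZ by auto
  then show ?thesis unfolding Z_def by (force simp: Z_def)
qed

lemma linear_cart_expand:
  fixes L :: "real^'n \<Rightarrow> real"
  assumes "linear L"
  shows "L v = (\<Sum>i\<in>UNIV. v$i * L (axis i 1))"
proof -
  have "L v = L (\<Sum>i\<in>UNIV. (v$i) *\<^sub>R axis i 1)"
    using basis_expansion[of v] by (simp add: scalar_mult_eq_scaleR)
  also have "\<dots> = (\<Sum>i\<in>UNIV. v$i * L (axis i 1))"
    using assms by (simp add: linear_sum linear_scale)
  finally show ?thesis .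
qed

lemma grad_deriv:
  fixes u :: "real^'n \<Rightarrow> real"
  assumes "u differentiable (at x)"
  shows "(u has_derivative (\<lambda>v. grad u x \<bullet> v)) (at x)"
proof -
  have d: "(u has_derivative frechet_derivative u (at x)) (at x)"
    using frechet_derivative_works[THEN iffD1, OF assms] .
  have lin: "linear (frechet_derivative u (at x))" by (rule has_derivative_linear[OF d])
  have eq: "frechet_derivative u (at x) v = grad u x \<bullet> v" for v
  proof -
    have "frechet_derivative u (at x) v = (\<Sum>i\<in>UNIV. v$i * frechet_derivative u (at x) (axis i 1))"
      by (rule linear_cart_expand[OF lin])
    also have "\<dots> = grad u x \<bullet> v"
      by (simp add: grad_def partial_deriv_def inner_vec_def mult.commute)
    finally show ?thesis .
  qed
  show ?thesis
    by (rule has_derivative_eq_rhs[OF d]) (simp add: fun_eq_iff eq)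
qed

definition Hu :: "(real^'n \<Rightarrow> real) \<Rightarrow> real^'n \<Rightarrow> real^'n^'n" where
  "Hu u x = (\<chi> i. grad (partial_deriv u i) x)"

lemma C2_u:
  fixes u :: "real^'n \<Rightarrow> real"
  assumes "C2_on A u" "x \<in> A"
  shows "(u has_derivative (\<lambda>v. grad u x \<bullet> v)) (at x)"
  using assms by (intro grad_deriv) (simp add: C2_on_def)

lemma grad_comp: "(\<lambda>x. grad u x $ i) = partial_deriv u i"
  by (simp add: grad_def fun_eq_iff)

lemma C2_g:
  fixes u :: "real^'n \<Rightarrow> real"
  assumes "C2_on A u" "x \<in> A"
  shows "((\<lambda>x. grad u x $ i) has_derivative (\<lambda>v. Hu u x $ i \<bullet> v)) (at x)"
proof -
  have "partial_deriv u i differentiable (at x)" using assms by (simp add: C2_on_def)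
  then have "(partial_deriv u i has_derivative (\<lambda>v. grad (partial_deriv u i) x \<bullet> v)) (at x)"
    by (rule grad_deriv)
  then show ?thesis by (simp add: grad_comp Hu_def)
qed

lemma C2_Hc:
  fixes u :: "real^'n \<Rightarrow> real"
  assumes "C2_on A u"
  shows "continuous_on A (Hu u)"
proof -
  have c: "continuous_on A (partial_deriv (partial_deriv u i) j)" for i j
    using assms by (simp add: C2_on_def)
  have "Hu u = (\<lambda>x. \<chi> i. \<chi> j. partial_deriv (partial_deriv u i) j x)"
    by (simp add: Hu_def grad_def fun_eq_iff)
  moreover have "continuous_on A (\<lambda>x. \<chi> i. \<chi> j. partial_deriv (partial_deriv u i) j x)"
    by (intro continuous_intros c)
  ultimately show ?thesis by simp
qed

lemma trace_Hu: "(\<Sum>i\<in>UNIV. Hu u x $ i $ i) = laplacian u x"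
  by (simp add: Hu_def grad_def laplacian_def)

definition Pq :: "(real^'n \<Rightarrow> real) \<Rightarrow> real^'n \<Rightarrow> real^'n \<Rightarrow> real" where
  "Pq u x0 x = u x0 + grad u x0 \<bullet> (x - x0) + (1/2) * ((x - x0) \<bullet> (Hu u x0 *v (x - x0)))"

definition HP :: "(real^'n \<Rightarrow> real) \<Rightarrow> real^'n \<Rightarrow> real^'n^'n" where
  "HP u x0 = (1/2) *\<^sub>R (Hu u x0 + transpose (Hu u x0))"

lemma HP_mult: "HP u x0 *v d = (1/2) *\<^sub>R (Hu u x0 *v d + transpose (Hu u x0) *v d)"
  by (simp add: vec_eq_iff matrix_vector_mult_def HP_def transpose_def sum.distrib
      sum_distrib_left algebra_simps)

lemma Pq_deriv:
  fixes u :: "real^'n \<Rightarrow> real"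
  shows "(Pq u x0 has_derivative (\<lambda>v. (grad u x0 + HP u x0 *v (x - x0)) \<bullet> v)) (at x)"
proof -
  let ?S = "Hu u x0"
  let ?d = "x - x0"
  have lin: "((\<lambda>x. ?S *v (x - x0)) has_derivative (\<lambda>v. ?S *v v)) (at x)"
  proof -
    have "((\<lambda>x. x - x0) has_derivative (\<lambda>v. v)) (at x)"
      by (auto intro!: derivative_eq_intros)
    from bounded_linear.has_derivative[OF matrix_vector_mul_bounded_linear this]
    show ?thesis .
  qed
  have "(Pq u x0 has_derivative (\<lambda>v. grad u x0 \<bullet> v + (1/2) * (?d \<bullet> (?S *v v) + v \<bullet> (?S *v ?d)))) (at x)"
    unfolding Pq_def[abs_def]
    by (rule has_derivative_eq_rhs, (rule derivative_intros lin)+) (auto simp: fun_eq_iff)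
  moreover have "grad u x0 \<bullet> v + (1/2) * (?d \<bullet> (?S *v v) + v \<bullet> (?S *v ?d))
      = (grad u x0 + HP u x0 *v ?d) \<bullet> v" for v
  proof -
    have "?d \<bullet> (?S *v v) = (transpose ?S *v ?d) \<bullet> v"
      by (simp add: dot_lmul_matrix)
    then show ?thesis
      by (simp add: HP_mult inner_add_left inner_commute algebra_simps)
  qed
  ultimately show ?thesis by simp
qed

lemma GP_deriv:
  fixes u :: "real^'n \<Rightarrow> real"
  shows "((\<lambda>x. (grad u x0 + HP u x0 *v (x - x0)) $ i) has_derivative (\<lambda>v. HP u x0 $ i \<bullet> v)) (at x)"
proof -
  have "(\<lambda>x. (grad u x0 + HP u x0 *v (x - x0)) $ i) = (\<lambda>x. grad u x0 $ i + HP u x0 $ i \<bullet> (x - x0))"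
    by (simp add: fun_eq_iff matrix_vector_mul_component)
  moreover have "((\<lambda>x. grad u x0 $ i + HP u x0 $ i \<bullet> (x - x0)) has_derivative (\<lambda>v. HP u x0 $ i \<bullet> v)) (at x)"
    by (auto intro!: derivative_eq_intros)
  ultimately show ?thesis by simp
qed

lemma trace_HP: "(\<Sum>i\<in>UNIV. HP u x0 $ i $ i) = laplacian u x0"
  by (simp add: HP_def transpose_def trace_Hu[symmetric] sum_distrib_left[symmetric] algebra_simps)

lemma mvp_h:
  fixes u :: "real^'n \<Rightarrow> real"
  assumes A: "open A" and C2: "C2_on A u" and lap: "\<forall>x\<in>A. laplacian u x = -1" and x0: "x0 \<in> A"
  shows "mvp A (\<lambda>x. Pq u x0 x - u x)"
proof -
  define G where "G x = (grad u x0 + HP u x0 *v (x - x0)) - grad u x" for x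
  define H where "H x = HP u x0 - Hu u x" for x
  have hd: "((\<lambda>x. Pq u x0 x - u x) has_derivative (\<lambda>v. G x \<bullet> v)) (at x)" if x: "x \<in> A" for x
    by (rule has_derivative_eq_rhs[OF has_derivative_diff[OF Pq_deriv C2_u[OF C2 x]]])
       (simp add: G_def fun_eq_iff inner_diff_left)
  have Gd: "((\<lambda>x. G x $ i) has_derivative (\<lambda>v. H x $ i \<bullet> v)) (at x)" if x: "x \<in> A" for x i
  proof -
    have e1: "(\<lambda>x. G x $ i) = (\<lambda>x. (grad u x0 + HP u x0 *v (x - x0)) $ i - grad u x $ i)"
      by (simp add: G_def fun_eq_iff)
    show ?thesis unfolding e1
      by (rule has_derivative_eq_rhs[OF has_derivative_diff[OF GP_deriv C2_g[OF C2 x]]])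
         (simp add: H_def fun_eq_iff inner_diff_left)
  qed
  have Hc: "continuous_on A H"
    unfolding H_def by (intro continuous_intros C2_Hc[OF C2])
  have tr: "(\<Sum>i\<in>UNIV. H x $ i $ i) = 0" if x: "x \<in> A" for x
    using lap x x0 by (simp add: H_def sum_subtractf trace_HP trace_Hu)
  have hc: "continuous_on A (\<lambda>x. Pq u x0 x - u x)"
    by (rule deriv_cont_on[OF hd])
  show ?thesis
    unfolding mvp_def cr_def
    using mvp_harmonic[OF hd Gd Hc tr] hc by blast
qed

lemma line_d1:
  fixes u :: "real^'n \<Rightarrow> real"
  assumes C2: "C2_on A u" and p: "x0 + t *\<^sub>R d \<in> A"
  shows "((\<lambda>t. u (x0 + t *\<^sub>R d)) has_real_derivative grad u (x0 + t *\<^sub>R d) \<bullet> d) (at t)"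
proof -
  have "((\<lambda>t. x0 + t *\<^sub>R d) has_derivative (\<lambda>s. s *\<^sub>R d)) (at t)"
    by (auto intro!: derivative_eq_intros)
  from diff_chain_at[OF this C2_u[OF C2 p]]
  have "((\<lambda>t. u (x0 + t *\<^sub>R d)) has_derivative (\<lambda>s. grad u (x0 + t *\<^sub>R d) \<bullet> (s *\<^sub>R d))) (at t)"
    by (simp add: o_def)
  then have "((\<lambda>t. u (x0 + t *\<^sub>R d)) has_derivative (*) (grad u (x0 + t *\<^sub>R d) \<bullet> d)) (at t)"
    by (rule has_derivative_eq_rhs) (simp add: fun_eq_iff)
  then show ?thesis by (simp add: has_field_derivative_def)
qed

lemma line_d2:
  fixes u :: "real^'n \<Rightarrow> real"
  assumes C2: "C2_on A u" and p: "x0 + t *\<^sub>R d \<in> A"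
  shows "((\<lambda>t. grad u (x0 + t *\<^sub>R d) \<bullet> d) has_real_derivative d \<bullet> (Hu u (x0 + t *\<^sub>R d) *v d)) (at t)"
proof -
  have comp: "((\<lambda>t. grad u (x0 + t *\<^sub>R d) $ i * d $ i) has_real_derivative
                 (Hu u (x0 + t *\<^sub>R d) $ i \<bullet> d) * d $ i) (at t)" for i
  proof -
    have "((\<lambda>t. x0 + t *\<^sub>R d) has_derivative (\<lambda>s. s *\<^sub>R d)) (at t)"
      by (auto intro!: derivative_eq_intros)
    from diff_chain_at[OF this C2_g[OF C2 p]]
    have "((\<lambda>t. grad u (x0 + t *\<^sub>R d) $ i) has_derivative (\<lambda>s. Hu u (x0 + t *\<^sub>R d) $ i \<bullet> (s *\<^sub>R d))) (at t)"
      by (simp add: o_def)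
    then have "((\<lambda>t. grad u (x0 + t *\<^sub>R d) $ i) has_derivative (*) (Hu u (x0 + t *\<^sub>R d) $ i \<bullet> d)) (at t)"
      by (rule has_derivative_eq_rhs) (simp add: fun_eq_iff)
    then have "((\<lambda>t. grad u (x0 + t *\<^sub>R d) $ i) has_real_derivative (Hu u (x0 + t *\<^sub>R d) $ i \<bullet> d)) (at t)"
      by (simp add: has_field_derivative_def)
    then show ?thesis by (rule DERIV_cmult_right)
  qed
  have "((\<lambda>t. \<Sum>i\<in>UNIV. grad u (x0 + t *\<^sub>R d) $ i * d $ i) has_real_derivative
          (\<Sum>i\<in>UNIV. (Hu u (x0 + t *\<^sub>R d) $ i \<bullet> d) * d $ i)) (at t)"
    by (rule DERIV_sum) (rule comp)
  moreover have "(\<lambda>t. \<Sum>i\<in>UNIV. grad u (x0 + t *\<^sub>R d) $ i * d $ i) = (\<lambda>t. grad u (x0 + t *\<^sub>R d) \<bullet> d)"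
    by (simp add: fun_eq_iff inner_vec_def)
  moreover have "(\<Sum>i\<in>UNIV. (Hu u (x0 + t *\<^sub>R d) $ i \<bullet> d) * d $ i) = d \<bullet> (Hu u (x0 + t *\<^sub>R d) *v d)"
    by (simp add: inner_vec_def matrix_vector_mul_component mult.commute)
  ultimately show ?thesis by simp
qed

lemma h_nonneg:
  fixes u :: "real^'n \<Rightarrow> real"
  assumes C2: "C2_on A u" and r: "r > 0" and ballA: "ball x0 r \<subseteq> A"
    and vnn: "\<forall>x\<in>ball x0 r. u x0 + inner (grad u x0) (x - x0) - u x \<ge> 0"
    and cvx: "convex_on (ball x0 r) (\<lambda>x. sqrt (u x0 + inner (grad u x0) (x - x0) - u x))"
    and x: "x \<in> ball x0 r"
  shows "Pq u x0 x - u x \<ge> 0"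
proof -
  define d where "d = x - x0"
  define g where "g t = u x0 + grad u x0 \<bullet> (t *\<^sub>R d) - u (x0 + t *\<^sub>R d)" for t
  define g1 where "g1 t = grad u x0 \<bullet> d - grad u (x0 + t *\<^sub>R d) \<bullet> d" for t
  define g2 where "g2 t = - (d \<bullet> (Hu u (x0 + t *\<^sub>R d) *v d))" for t
  have inB: "x0 + t *\<^sub>R d \<in> ball x0 r" if t: "t \<in> {0..1}" for t
  proof -
    have "norm (t *\<^sub>R d) \<le> norm d" using t by (simp add: mult_left_le_one_le)
    moreover have "norm d < r" using x by (simp add: d_def dist_norm norm_minus_commute)
    ultimately show ?thesis by (simp add: dist_norm)
  qed
  have inA: "x0 + t *\<^sub>R d \<in> A" if "t \<in> {0..1}" for t using inB[OF that] ballA by auto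
  have Dg: "DERIV g t :> g1 t" if t: "t \<in> {0..1}" for t
  proof -
    have "((\<lambda>t. u x0 + t * (grad u x0 \<bullet> d) - u (x0 + t *\<^sub>R d)) has_real_derivative
            0 + 1 * (grad u x0 \<bullet> d) - grad u (x0 + t *\<^sub>R d) \<bullet> d) (at t)"
    proof -
      have a: "((\<lambda>t. t * (grad u x0 \<bullet> d)) has_real_derivative 1 * (grad u x0 \<bullet> d)) (at t)"
        by (rule DERIV_cmult_right[OF DERIV_ident])
      show ?thesis by (intro derivative_intros a line_d1[OF C2 inA[OF t]])
    qed
    then show ?thesis by (simp add: g_def[abs_def] g1_def)
  qed
  have Dg1: "DERIV g1 t :> g2 t" if t: "t \<in> {0..1}" for t
  proof -
    have "((\<lambda>t. grad u x0 \<bullet> d - grad u (x0 + t *\<^sub>R d) \<bullet> d) has_real_derivative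
             0 - d \<bullet> (Hu u (x0 + t *\<^sub>R d) *v d)) (at t)"
      by (intro derivative_intros line_d2[OF C2 inA[OF t]])
    then show ?thesis by (simp add: g1_def[abs_def] g2_def)
  qed
  have g0: "g 0 = 0" by (simp add: g_def)
  have g10: "g1 0 = 0" by (simp add: g1_def)
  have taylor: "\<exists>t. 0 < t \<and> t < s \<and> g s = g2 t / 2 * s\<^sup>2" if s: "s \<in> {0<..1}" for s
  proof -
    define diff where "diff m = (case m of 0 \<Rightarrow> g | Suc 0 \<Rightarrow> g1 | _ \<Rightarrow> g2)" for m :: nat
    have d0: "diff 0 = g" by (simp add: diff_def)
    have dS: "\<forall>m t. m < 2 \<and> 0 \<le> t \<and> t \<le> s \<longrightarrow> DERIV (diff m) t :> diff (Suc m) t"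
    proof (intro allI impI)
      fix m :: nat and t assume h: "m < 2 \<and> 0 \<le> t \<and> t \<le> s"
      then have t: "t \<in> {0..1}" using s by auto
      from h have "m = 0 \<or> m = 1" by auto
      then show "DERIV (diff m) t :> diff (Suc m) t"
        using Dg[OF t] Dg1[OF t] by (auto simp: diff_def)
    qed
    from Maclaurin[OF _ _ d0 dS] s obtain t where
      t: "0 < t" "t < s" "g s = (\<Sum>m<2. diff m 0 / fact m * s ^ m) + diff 2 t / fact 2 * s ^ 2"
      by auto
    have "(\<Sum>m<2. diff m 0 / fact m * s ^ m) = 0"
      by (simp add: numeral_2_eq_2 diff_def g0 g10)
    moreover have "diff 2 t = g2 t" by (simp add: diff_def numeral_2_eq_2)
    ultimately show ?thesis using t by (auto simp: numeral_2_eq_2)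
  qed
  have conv: "g s \<le> s\<^sup>2 * g 1" if s: "s \<in> {0<..1}" for s
  proof -
    have x0B: "x0 \<in> ball x0 r" using r by simp
    have ineq: "sqrt (u x0 + grad u x0 \<bullet> ((1 - s) *\<^sub>R x0 + s *\<^sub>R x - x0) - u ((1 - s) *\<^sub>R x0 + s *\<^sub>R x))
          \<le> (1 - s) * sqrt (u x0 + grad u x0 \<bullet> (x0 - x0) - u x0) + s * sqrt (u x0 + grad u x0 \<bullet> (x - x0) - u x)"
      using convex_onD[OF cvx, of s x0 x] s x0B x by auto
    have E_eq: "(1 - s) *\<^sub>R x0 + s *\<^sub>R x = x0 + s *\<^sub>R d" by (simp add: d_def algebra_simps)
    have eqs: "u x0 + grad u x0 \<bullet> ((1 - s) *\<^sub>R x0 + s *\<^sub>R x - x0) - u ((1 - s) *\<^sub>R x0 + s *\<^sub>R x) = g s"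
      unfolding E_eq by (simp add: g_def)
    have eq1: "u x0 + grad u x0 \<bullet> (x - x0) - u x = g 1" by (simp add: g_def d_def)
    have eq0: "u x0 + grad u x0 \<bullet> (x0 - x0) - u x0 = 0" by simp
    have sq: "sqrt (g s) \<le> s * sqrt (g 1)"
      using ineq unfolding eqs eq1 eq0 by simp
    have gs0: "g s \<ge> 0"
    proof -
      have "x0 + s *\<^sub>R d \<in> ball x0 r" using inB s by auto
      then have "u x0 + grad u x0 \<bullet> ((x0 + s *\<^sub>R d) - x0) - u (x0 + s *\<^sub>R d) \<ge> 0"
        using vnn by blast
      moreover have "g s = u x0 + grad u x0 \<bullet> ((x0 + s *\<^sub>R d) - x0) - u (x0 + s *\<^sub>R d)"
        by (simp add: g_def)
      ultimately show ?thesis by linarith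
    qed
    have g10': "g 1 \<ge> 0" using vnn x by (simp add: g_def d_def)
    have "g s = (sqrt (g s))\<^sup>2" using gs0 by simp
    also have "\<dots> \<le> (s * sqrt (g 1))\<^sup>2"
      by (rule power_mono[OF sq]) (simp add: gs0)
    also have "\<dots> = s\<^sup>2 * g 1" using g10' by (simp add: power_mult_distrib)
    finally show ?thesis .
  qed
  have key: "\<exists>t. 0 < t \<and> t < s \<and> g2 t / 2 \<le> g 1" if s: "s \<in> {0<..1}" for s
  proof -
    obtain t where t: "0 < t" "t < s" "g s = g2 t / 2 * s\<^sup>2" using taylor[OF s] by blast
    have "g2 t / 2 * s\<^sup>2 \<le> g 1 * s\<^sup>2" using conv[OF s] t by (simp add: mult.commute)
    then have "g2 t / 2 \<le> g 1" using s by (simp add: mult_le_cancel_right)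
    then show ?thesis using t by blast
  qed
  have g2c: "continuous_on {0..1} g2"
  proof -
    have c: "continuous_on {0..1} (\<lambda>t. Hu u (x0 + t *\<^sub>R d))"
      by (rule continuous_on_compose2[OF C2_Hc[OF C2]]) (use inA in \<open>auto intro!: continuous_intros\<close>)
    have "g2 = (\<lambda>t. - (\<Sum>i\<in>UNIV. d $ i * (Hu u (x0 + t *\<^sub>R d) $ i \<bullet> d)))"
      by (simp add: g2_def fun_eq_iff inner_vec_def matrix_vector_mul_component)
    moreover have "continuous_on {0..1} (\<lambda>t. - (\<Sum>i\<in>UNIV. d $ i * (Hu u (x0 + t *\<^sub>R d) $ i \<bullet> d)))"
      by (intro continuous_intros c)
    ultimately show ?thesis by simp
  qed
  have main: "g2 0 / 2 \<le> g 1"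
  proof (rule ccontr)
    assume "\<not> g2 0 / 2 \<le> g 1"
    then have \<epsilon>: "g2 0 / 2 - g 1 > 0" by simp
    obtain \<delta> where \<delta>: "\<delta> > 0" "\<forall>t\<in>{0..1}. dist t 0 < \<delta> \<longrightarrow> dist (g2 t) (g2 0) < g2 0 / 2 - g 1"
      using g2c[unfolded continuous_on_iff] \<epsilon> by (metis atLeastAtMost_iff order_refl zero_le_one)
    define s where "s = min 1 (\<delta>/2)"
    have s: "s \<in> {0<..1}" using \<delta> by (auto simp: s_def)
    obtain t where t: "0 < t" "t < s" "g2 t / 2 \<le> g 1" using key[OF s] by blast
    have "t \<in> {0..1}" "dist t 0 < \<delta>" using t s by (auto simp: s_def dist_real_def)
    then have "dist (g2 t) (g2 0) < g2 0 / 2 - g 1" using \<delta> by blast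
    then show False using t by (auto simp: dist_real_def abs_less_iff)
  qed
  have "Pq u x0 x - u x = g 1 - g2 0 / 2"
    by (simp add: Pq_def g_def g2_def d_def)
  then show ?thesis using main by simp
qed

lemma quad_expand:
  fixes S :: "real^'n^'n" and x a :: "real^'n"
  shows "(x - a) \<bullet> (S *v (x - a)) =
    (\<Sum>i\<in>UNIV. \<Sum>j\<in>UNIV. S$i$j * x$i * x$j)
    - (\<Sum>i\<in>UNIV. (\<Sum>j\<in>UNIV. (S$i$j + S$j$i) * a$j) * x$i)
    + (\<Sum>i\<in>UNIV. \<Sum>j\<in>UNIV. S$i$j * a$i * a$j)"
proof -
  have e1: "(x - a) \<bullet> (S *v (x - a)) = (\<Sum>i\<in>UNIV. \<Sum>j\<in>UNIV. S$i$j * (x$i - a$i) * (x$j - a$j))"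
    by (simp add: inner_vec_def matrix_vector_mult_def sum_distrib_left mult.commute mult.left_commute)
  have e2: "S$i$j * (x$i - a$i) * (x$j - a$j) = S$i$j * x$i * x$j - S$i$j * a$j * x$i - S$i$j * a$i * x$j + S$i$j * a$i * a$j"
    for i j by (simp add: algebra_simps)
  have T3: "(\<Sum>i\<in>UNIV. \<Sum>j\<in>UNIV. S$i$j * a$i * x$j) = (\<Sum>i\<in>UNIV. \<Sum>j\<in>UNIV. S$j$i * a$j * x$i)"
    by (rule sum.swap)
  have T2: "(\<Sum>i\<in>UNIV. (\<Sum>j\<in>UNIV. (S$i$j + S$j$i) * a$j) * x$i)
     = (\<Sum>i\<in>UNIV. \<Sum>j\<in>UNIV. S$i$j * a$j * x$i) + (\<Sum>i\<in>UNIV. \<Sum>j\<in>UNIV. S$j$i * a$j * x$i)"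
    by (simp add: sum_distrib_right sum_distrib_left sum.distrib algebra_simps)
  show ?thesis
    unfolding e1 e2 T2 by (simp add: sum.distrib sum_subtractf T3)
qed

lemma Pq_poly:
  fixes u :: "real^'n \<Rightarrow> real"
  shows "quadratic_polynomial_on A (Pq u x0)"
proof -
  let ?S = "Hu u x0"
  let ?G = "grad u x0"
  define a where "a i j = ?S$i$j / 2" for i j
  define b where "b i = ?G$i - (1/2) * (\<Sum>j\<in>UNIV. (?S$i$j + ?S$j$i) * x0$j)" for i
  define c where "c = u x0 - ?G \<bullet> x0 + (1/2) * (\<Sum>i\<in>UNIV. \<Sum>j\<in>UNIV. ?S$i$j * x0$i * x0$j)"
  have "Pq u x0 x = (\<Sum>i\<in>UNIV. \<Sum>j\<in>UNIV. a i j * x$i * x$j) + (\<Sum>i\<in>UNIV. b i * x$i) + c" for x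
  proof -
    have g: "?G \<bullet> (x - x0) = (\<Sum>i\<in>UNIV. ?G$i * x$i) - ?G \<bullet> x0"
      by (simp add: inner_vec_def right_diff_distrib sum_subtractf)
    have qa: "(\<Sum>i\<in>UNIV. \<Sum>j\<in>UNIV. a i j * x$i * x$j) = (1/2) * (\<Sum>i\<in>UNIV. \<Sum>j\<in>UNIV. ?S$i$j * x$i * x$j)"
      by (simp add: a_def sum_distrib_left)
    have qb: "(\<Sum>i\<in>UNIV. b i * x$i) = (\<Sum>i\<in>UNIV. ?G$i * x$i)
         - (1/2) * (\<Sum>i\<in>UNIV. (\<Sum>j\<in>UNIV. (?S$i$j + ?S$j$i) * x0$j) * x$i)"
      by (simp add: b_def sum_subtractf sum_distrib_left algebra_simps)
    show ?thesis
      unfolding Pq_def quad_expand g qa qb c_def by (simp add: algebra_simps)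
  qed
  then show ?thesis unfolding quadratic_polynomial_on_def by blast
qed

theorem proposition3p1:
  fixes A :: "(real^'n) set" and u :: "real^'n \<Rightarrow> real" and x0 :: "real^'n"
  assumes "CARD('n) \<ge> 2"
    and "bounded A" and "connected A" and "open A"
    and "C2_on A u"
    and "\<forall>x\<in>A. laplacian u x = -1"
    and "x0 \<in> A"
    and "\<exists>r>0. ball x0 r \<subseteq> A \<and>
           (\<forall>x\<in>ball x0 r. u x0 + inner (grad u x0) (x - x0) - u x \<ge> 0) \<and>
           convex_on (ball x0 r) (\<lambda>x. sqrt (u x0 + inner (grad u x0) (x - x0) - u x))"
  shows "quadratic_polynomial_on A u"
proof -
  note conn = assms(3) and A = assms(4) and C2 = assms(5) and lap = assms(6) and x0 = assms(7)
  obtain r where r: "r > 0" and ballA: "ball x0 r \<subseteq> A"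
    and vnn: "\<forall>x\<in>ball x0 r. u x0 + inner (grad u x0) (x - x0) - u x \<ge> 0"
    and cvx: "convex_on (ball x0 r) (\<lambda>x. sqrt (u x0 + inner (grad u x0) (x - x0) - u x))"
    using assms(8) by blast
  define h where "h x = Pq u x0 x - u x" for x
  have m: "mvp A h" unfolding h_def[abs_def] by (rule mvp_h[OF A C2 lap x0])
  have nn: "h x \<ge> 0" if "x \<in> ball x0 r" for x
    unfolding h_def by (rule h_nonneg[OF C2 r ballA vnn cvx that])
  have h0: "h x0 = 0" by (simp add: h_def Pq_def)
  let ?K = "real CARD('n)"
  let ?C = "cbox (-1) (1::real^'n)"
  have K1: "?K \<ge> 1" by (rule card_ge1)
  define R where "R = r / (2 * ?K)"
  have R: "R > 0" using r K1 by (simp add: R_def)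
  have RK: "R * ?K = r / 2" using K1 by (simp add: R_def)
  have subR: "cball x0 (R * ?K) \<subseteq> A" using RK ballA r by auto
  have int0: "integral ?C (\<lambda>y. h (x0 + R *\<^sub>R y) * rho y) = 0"
    using mvp_eq[OF m R subR] h0 by simp
  have inB: "x0 + R *\<^sub>R y \<in> ball x0 r" if y: "y \<in> ?C" for y
  proof -
    have "norm (R *\<^sub>R y) \<le> R * ?K" using cube_norm[OF y] R by (simp add: mult_left_mono)
    then show ?thesis using RK r by (simp add: dist_norm)
  qed
  have hc: "continuous_on A h" using m by (simp add: mvp_def)
  have fc: "continuous_on ?C (\<lambda>y. h (x0 + R *\<^sub>R y) * rho y)"
    by (intro continuous_intros continuous_rho cont_comp_aff[OF hc]) (use inB ballA in auto)
  have fint: "((\<lambda>y. h (x0 + R *\<^sub>R y) * rho y) has_integral 0) ?C"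
    using integrable_integral[OF integrable_continuous[OF fc]] int0 by simp
  have ne: "box (-1) (1::real^'n) \<noteq> {}"
  proof -
    have "(0::real^'n) \<in> box (-1) 1" by (simp add: mem_box_cart)
    then show ?thesis by auto
  qed
  have fz: "h (x0 + R *\<^sub>R y) * rho y = 0" if y: "y \<in> ?C" for y
  proof (rule has_integral_0_cbox_imp_0[OF fc _ fint ne y])
    fix z assume "z \<in> box (-1) (1::real^'n)"
    then have "z \<in> ?C" using box_subset_cbox by blast
    then show "0 \<le> h (x0 + R *\<^sub>R z) * rho z"
      using nn[OF inB[OF \<open>z \<in> ?C\<close>]] rho_nonneg[of z] by (intro mult_nonneg_nonneg)
  qed
  have zero: "\<forall>z\<in>ball x0 R. h z = 0"
  proof
    fix z assume z: "z \<in> ball x0 R"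
    define y where "y = (1/R) *\<^sub>R (z - x0)"
    have ny: "norm y < 1" using z R by (simp add: y_def dist_norm norm_minus_commute)
    have yC: "y \<in> ?C" using cball_sub_cube[of y 1] ny by simp
    have zy: "x0 + R *\<^sub>R y = z" using R by (simp add: y_def)
    have "rho y > 0" by (rule rho_pos[OF ny])
    then show "h z = 0" using fz[OF yC] zy by simp
  qed
  have all: "\<forall>x\<in>A. h x = 0" by (rule uc[OF m A conn x0 R zero])
  have "\<forall>x\<in>A. u x = Pq u x0 x" using all by (simp add: h_def)
  moreover obtain a b c where abc: "\<forall>x\<in>A. Pq u x0 x = (\<Sum>i\<in>UNIV. \<Sum>j\<in>UNIV. a i j * x$i * x$j) + (\<Sum>i\<in>UNIV. b i * x$i) + c"
    using Pq_poly[of A u x0] unfolding quadratic_polynomial_on_def by blast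
  ultimately show ?thesis unfolding quadratic_polynomial_on_def by auto
qed

end
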